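(* Let $\alpha:U\to V$ be a surjective transmission between commutative supertropical monoids, $M:=eU$, $N:=eV$, and $\gamma:=\alpha^\nu:M\to N$. (i) There exists a factorization $\alpha=\mu\circ\beta\circ\lambda$ with $\lambda$ an ideal compression of $U$, $\beta$ a strict ghost contraction, and $\mu$ a tangible fiber contraction over $N$. (ii) The factorization is essentially unique: if $\alpha=\mu'\circ\beta'\circ\lambda'$ is a second such factorization, then there exist isomorphisms of supertropical monoids $\rho$ over $M$ and $\sigma$ over $N$ such that $\lambda'=\rho\lambda$, $\mu'=\mu\sigma^{-1}$, $\beta'=\sigma\beta\rho^{-1}$. (iii) In particular one can choose $\lambda=\pi_{E(U,\mathfrak A)}:U\to\bar U:=U/E(U,\mathfrak A)$ with $\mathfrak A:=\mathfrak A_\alpha$ the ghost kernel of $\alpha$, $\beta=\pi_{F(\bar U,\gamma)}:\bar U\to W:=\bar U/F(\bar U,\gamma)$, and $\mu:W\to V$ the resulting tangible fiber contraction over $N$ with $\alpha=\mu\beta\lambda$.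
   Context: All monoids are commutative. A supertropical monoid is a monoid $(U,\cdot)$ with absorbing element $0$ and distinguished idempotent $e$ with $ex=0\Rightarrow x=0$, together with a total ordering on $M:=eU$, compatible with multiplication and with $0$ least, making $M$ a bipotent semiring (addition $=\max$). Tangible elements: $\mathcal T(U):=U\setminus eU$. A transmission $\alpha:U\to V$ is a map with $\alpha(0)=0$, $\alpha(1)=1$, $\alpha(xy)=\alpha(x)\alpha(y)$, $\alpha(e_U)=e_V$, and order-preserving on $eU$; its ghost part $\alpha^\nu:eU\to eV$ is its restriction; ghost kernel $\mathfrak A_\alpha:=\{x:\alpha(x)\in eV\}$, zero kernel $\mathfrak z_\alpha:=\alpha^{-1}(0)$. An isomorphism over $M$ is an isomorphism whose ghost part is the identity of $M$. A fiber contraction is a surjective transmission whose ghost part is an isomorphism; it is "over $M$" if $eV=eU=M$ and the ghost part is $\mathrm{id}_M$. An ideal compression is a fiber contraction over $M$ mapping $U\setminus\mathfrak A_\alpha$ bijectively onto $V\setminus N=\mathcal T(V)$. A transmission is tangible if $\alpha(\mathcal T(U))\subset\mathcal T(V)\cup\{0\}$. A ghost contraction is a transmission $\alpha$ whose ghost part maps $M$ onto $N$ and which maps $U\setminus(M\cup\mathfrak z_\alpha)$ bijectively onto $\mathcal T(V)$; it is strict if $\alpha^{-1}(0)\subset M$. For an equivalence relation $E$ on $U$ that is a TE-relation (multiplicative, order compatible on $M$, and $ex\sim_E0\Rightarrow x\sim_E0$), $U/E$ carries the unique supertropical monoid structure making $\pi_E:x\mapsto[x]_E$ a transmission. For an ideal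 $\mathfrak A\supseteq M$ of $U$, $E(U,\mathfrak A)$ is the TE-relation: $x\sim y$ iff $x=y$, or $x,y\in\mathfrak A$ and $ex=ey$; the ghost ideal of $U/E(U,\mathfrak A)$ is identified with $M$. For a surjective semiring homomorphism $\gamma:M\to N$, $F(U,\gamma)$ is the TE-relation: $x\sim y$ iff $x=y$, or $x,y\in M$ with $\gamma(x)=\gamma(y)$, or $\gamma(ex)=\gamma(ey)=0$; the ghost ideal of $U/F(U,\gamma)$ is identified with $N$. *)

theory Defs
  imports Main
begin

record 'a stm =
  st_carrier :: "'a set"
  st_mult :: "'a \<Rightarrow> 'a \<Rightarrow> 'a"
  st_zero :: 'a
  st_one :: 'a
  st_e :: 'a
  st_le :: "'a \<Rightarrow> 'a \<Rightarrow> bool"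

definition ghosts :: "('a, 'm) stm_scheme \<Rightarrow> 'a set" where
  "ghosts U = (\<lambda>x. st_mult U (st_e U) x) ` st_carrier U"

definition tangibles :: "('a, 'm) stm_scheme \<Rightarrow> 'a set" where
  "tangibles U = st_carrier U - ghosts U"

definition supertropical_monoid :: "('a, 'm) stm_scheme \<Rightarrow> bool" where
  "supertropical_monoid U \<longleftrightarrow>
     (\<forall>x\<in>st_carrier U. \<forall>y\<in>st_carrier U. st_mult U x y \<in> st_carrier U) \<and>
     (\<forall>x\<in>st_carrier U. \<forall>y\<in>st_carrier U. \<forall>z\<in>st_carrier U.
        st_mult U (st_mult U x y) z = st_mult U x (st_mult U y z)) \<and>
     (\<forall>x\<in>st_carrier U. \<forall>y\<in>st_carrier U. st_mult U x y = st_mult U y x) \<and>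
     st_one U \<in> st_carrier U \<and> (\<forall>x\<in>st_carrier U. st_mult U (st_one U) x = x) \<and>
     st_zero U \<in> st_carrier U \<and> (\<forall>x\<in>st_carrier U. st_mult U (st_zero U) x = st_zero U) \<and>
     st_e U \<in> st_carrier U \<and> st_mult U (st_e U) (st_e U) = st_e U \<and>
     (\<forall>x\<in>st_carrier U. st_mult U (st_e U) x = st_zero U \<longrightarrow> x = st_zero U) \<and>
     \<comment> \<open>total ordering on M = eU\<close>
     (\<forall>x\<in>ghosts U. st_le U x x) \<and>
     (\<forall>x\<in>ghosts U. \<forall>y\<in>ghosts U. st_le U x y \<and> st_le U y x \<longrightarrow> x = y) \<and>
     (\<forall>x\<in>ghosts U. \<forall>y\<in>ghosts U. \<forall>z\<in>ghosts U. st_le U x y \<and> st_le U y z \<longrightarrow> st_le U x z) \<and>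
     (\<forall>x\<in>ghosts U. \<forall>y\<in>ghosts U. st_le U x y \<or> st_le U y x) \<and>
     \<comment> \<open>compatible with multiplication (so M is a bipotent semiring with + = max)\<close>
     (\<forall>x\<in>ghosts U. \<forall>y\<in>ghosts U. \<forall>z\<in>ghosts U.
        st_le U x y \<longrightarrow> st_le U (st_mult U x z) (st_mult U y z)) \<and>
     \<comment> \<open>0 is least\<close>
     (\<forall>x\<in>ghosts U. st_le U (st_zero U) x)"

definition transmission :: "('a, 'm) stm_scheme \<Rightarrow> ('b, 'n) stm_scheme \<Rightarrow> ('a \<Rightarrow> 'b) \<Rightarrow> bool" where
  "transmission U V f \<longleftrightarrow>
     f ` st_carrier U \<subseteq> st_carrier V \<and>
     f (st_zero U) = st_zero V \<and> f (st_one U) = st_one V \<and>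
     (\<forall>x\<in>st_carrier U. \<forall>y\<in>st_carrier U. f (st_mult U x y) = st_mult V (f x) (f y)) \<and>
     f (st_e U) = st_e V \<and>
     (\<forall>x\<in>ghosts U. \<forall>y\<in>ghosts U. st_le U x y \<longrightarrow> st_le V (f x) (f y))"

definition ghost_kernel :: "('a, 'm) stm_scheme \<Rightarrow> ('b, 'n) stm_scheme \<Rightarrow> ('a \<Rightarrow> 'b) \<Rightarrow> 'a set" where
  "ghost_kernel U V f = {x\<in>st_carrier U. f x \<in> ghosts V}"

definition zero_kernel :: "('a, 'm) stm_scheme \<Rightarrow> ('b, 'n) stm_scheme \<Rightarrow> ('a \<Rightarrow> 'b) \<Rightarrow> 'a set" where
  "zero_kernel U V f = {x\<in>st_carrier U. f x = st_zero V}"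

definition stm_iso :: "('a, 'm) stm_scheme \<Rightarrow> ('b, 'n) stm_scheme \<Rightarrow> ('a \<Rightarrow> 'b) \<Rightarrow> bool" where
  "stm_iso U V f \<longleftrightarrow> transmission U V f \<and> bij_betw f (st_carrier U) (st_carrier V) \<and>
     transmission V U (inv_into (st_carrier U) f)"

definition fiber_contraction :: "('a, 'm) stm_scheme \<Rightarrow> ('b, 'n) stm_scheme \<Rightarrow> ('a \<Rightarrow> 'b) \<Rightarrow> bool" where
  "fiber_contraction U V f \<longleftrightarrow> transmission U V f \<and> f ` st_carrier U = st_carrier V \<and>
     bij_betw f (ghosts U) (ghosts V) \<and>
     (\<forall>x\<in>ghosts U. \<forall>y\<in>ghosts U. st_le V (f x) (f y) \<longrightarrow> st_le U x y)"

definition ideal_compression :: "('a, 'm) stm_scheme \<Rightarrow> ('b, 'n) stm_scheme \<Rightarrow> ('a \<Rightarrow> 'b) \<Rightarrow> bool" where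
  "ideal_compression U V f \<longleftrightarrow> fiber_contraction U V f \<and>
     bij_betw f (st_carrier U - ghost_kernel U V f) (tangibles V)"

definition tangible_transmission :: "('a, 'm) stm_scheme \<Rightarrow> ('b, 'n) stm_scheme \<Rightarrow> ('a \<Rightarrow> 'b) \<Rightarrow> bool" where
  "tangible_transmission U V f \<longleftrightarrow> transmission U V f \<and>
     f ` tangibles U \<subseteq> tangibles V \<union> {st_zero V}"

definition ghost_contraction :: "('a, 'm) stm_scheme \<Rightarrow> ('b, 'n) stm_scheme \<Rightarrow> ('a \<Rightarrow> 'b) \<Rightarrow> bool" where
  "ghost_contraction U V f \<longleftrightarrow> transmission U V f \<and> f ` ghosts U = ghosts V \<and>
     bij_betw f (st_carrier U - (ghosts U \<union> zero_kernel U V f)) (tangibles V)"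

definition strict_ghost_contraction :: "('a, 'm) stm_scheme \<Rightarrow> ('b, 'n) stm_scheme \<Rightarrow> ('a \<Rightarrow> 'b) \<Rightarrow> bool" where
  "strict_ghost_contraction U V f \<longleftrightarrow> ghost_contraction U V f \<and> zero_kernel U V f \<subseteq> ghosts U"

definition is_factorization ::
  "('a, 'm) stm_scheme \<Rightarrow> ('b, 'n) stm_scheme \<Rightarrow> ('a \<Rightarrow> 'b) \<Rightarrow>
   'c stm \<Rightarrow> 'd stm \<Rightarrow> ('a \<Rightarrow> 'c) \<Rightarrow> ('c \<Rightarrow> 'd) \<Rightarrow> ('d \<Rightarrow> 'b) \<Rightarrow> bool" where
  "is_factorization U V \<alpha> U1 W1 lam bet mu \<longleftrightarrow>
     supertropical_monoid U1 \<and> supertropical_monoid W1 \<and>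
     ideal_compression U U1 lam \<and> strict_ghost_contraction U1 W1 bet \<and>
     tangible_transmission W1 V mu \<and> fiber_contraction W1 V mu \<and>
     (\<forall>x\<in>st_carrier U. \<alpha> x = mu (bet (lam x)))"

definition cls :: "('a, 'm) stm_scheme \<Rightarrow> ('a \<times> 'a) set \<Rightarrow> 'a \<Rightarrow> 'a set" where
  "cls U E x = {y\<in>st_carrier U. (x, y) \<in> E}"

definition quot_stm :: "('a, 'm) stm_scheme \<Rightarrow> ('a \<times> 'a) set \<Rightarrow> 'a set stm" where
  "quot_stm U E = \<lparr> st_carrier = cls U E ` st_carrier U,
     st_mult = (\<lambda>X Y. cls U E (st_mult U (SOME x. x \<in> X) (SOME y. y \<in> Y))),
     st_zero = cls U E (st_zero U),
     st_one = cls U E (st_one U),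
     st_e = cls U E (st_e U),
     st_le = (\<lambda>X Y. \<exists>a\<in>X \<inter> ghosts U. \<exists>b\<in>Y \<inter> ghosts U. st_le U a b) \<rparr>"

definition quot_map :: "('a, 'm) stm_scheme \<Rightarrow> ('a \<times> 'a) set \<Rightarrow> 'a \<Rightarrow> 'a set" where
  "quot_map U E = cls U E"

text \<open>\<open>E(U,\<AA>)\<close> for an ideal \<open>\<AA> \<supseteq> M\<close>.\<close>
definition rel_E :: "('a, 'm) stm_scheme \<Rightarrow> 'a set \<Rightarrow> ('a \<times> 'a) set" where
  "rel_E U A = {(x, y). x \<in> st_carrier U \<and> y \<in> st_carrier U \<and>
     (x = y \<or> (x \<in> A \<and> y \<in> A \<and> st_mult U (st_e U) x = st_mult U (st_e U) y))}"

text \<open>\<open>F(U,\<gamma>)\<close> for a map \<open>\<gamma>\<close> from the ghosts of U onto N, \<open>z\<close> being the zero of N.\<close>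
definition rel_F :: "('a, 'm) stm_scheme \<Rightarrow> ('a \<Rightarrow> 'b) \<Rightarrow> 'b \<Rightarrow> ('a \<times> 'a) set" where
  "rel_F U g z = {(x, y). x \<in> st_carrier U \<and> y \<in> st_carrier U \<and>
     (x = y \<or> (x \<in> ghosts U \<and> y \<in> ghosts U \<and> g x = g y) \<or>
      (g (st_mult U (st_e U) x) = z \<and> g (st_mult U (st_e U) y) = z))}"

end

theory Submission
  imports Defs
begin


locale stl =
  fixes U :: "('a,'m) stm_scheme"
  assumes st: "supertropical_monoid U"
begin

lemmas S0 = st[unfolded supertropical_monoid_def]
lemmas P0 = conjunct1[OF S0]
lemmas S1 = conjunct2[OF S0]
lemma closed: "x \<in> st_carrier U \<Longrightarrow> y \<in> st_carrier U \<Longrightarrow> st_mult U x y \<in> st_carrier U"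
  using P0[rule_format] by blast
lemmas P1 = conjunct1[OF S1]
lemmas S2 = conjunct2[OF S1]
lemma assoc: "x \<in> st_carrier U \<Longrightarrow> y \<in> st_carrier U \<Longrightarrow> z \<in> st_carrier U \<Longrightarrow> st_mult U (st_mult U x y) z = st_mult U x (st_mult U y z)"
  using P1[rule_format] by blast
lemmas P2 = conjunct1[OF S2]
lemmas S3 = conjunct2[OF S2]
lemma comm: "x \<in> st_carrier U \<Longrightarrow> y \<in> st_carrier U \<Longrightarrow> st_mult U x y = st_mult U y x"
  using P2[rule_format] by blast
lemmas P3 = conjunct1[OF S3]
lemmas S4 = conjunct2[OF S3]
lemma one1: "st_one U \<in> st_carrier U"
  using P3[rule_format] by blast
lemmas P4 = conjunct1[OF S4]
lemmas S5 = conjunct2[OF S4]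
lemma one2: "x \<in> st_carrier U \<Longrightarrow> st_mult U (st_one U) x = x"
  using P4[rule_format] by blast
lemmas P5 = conjunct1[OF S5]
lemmas S6 = conjunct2[OF S5]
lemma zero1: "st_zero U \<in> st_carrier U"
  using P5[rule_format] by blast
lemmas P6 = conjunct1[OF S6]
lemmas S7 = conjunct2[OF S6]
lemma zero2: "x \<in> st_carrier U \<Longrightarrow> st_mult U (st_zero U) x = st_zero U"
  using P6[rule_format] by blast
lemmas P7 = conjunct1[OF S7]
lemmas S8 = conjunct2[OF S7]
lemma ee1: "st_e U \<in> st_carrier U"
  using P7[rule_format] by blast
lemmas P8 = conjunct1[OF S8]
lemmas S9 = conjunct2[OF S8]
lemma ee2: "st_mult U (st_e U) (st_e U) = st_e U"
  using P8[rule_format] by blast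
lemmas P9 = conjunct1[OF S9]
lemmas S10 = conjunct2[OF S9]
lemma e0: "x \<in> st_carrier U \<Longrightarrow> st_mult U (st_e U) x = st_zero U \<Longrightarrow> x = st_zero U"
  using P9[rule_format] by blast
lemmas P10 = conjunct1[OF S10]
lemmas S11 = conjunct2[OF S10]
lemma le_refl: "x \<in> ghosts U \<Longrightarrow> st_le U x x"
  using P10[rule_format] by blast
lemmas P11 = conjunct1[OF S11]
lemmas S12 = conjunct2[OF S11]
lemma le_antisym: "x \<in> ghosts U \<Longrightarrow> y \<in> ghosts U \<Longrightarrow> st_le U x y \<Longrightarrow> st_le U y x \<Longrightarrow> x = y"
  using P11[rule_format] by blast
lemmas P12 = conjunct1[OF S12]
lemmas S13 = conjunct2[OF S12]
lemma le_trans: "x \<in> ghosts U \<Longrightarrow> y \<in> ghosts U \<Longrightarrow> z \<in> ghosts U \<Longrightarrow> st_le U x y \<Longrightarrow> st_le U y z \<Longrightarrow> st_le U x z"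
  using P12[rule_format] by blast
lemmas P13 = conjunct1[OF S13]
lemmas S14 = conjunct2[OF S13]
lemma le_total: "x \<in> ghosts U \<Longrightarrow> y \<in> ghosts U \<Longrightarrow> st_le U x y \<or> st_le U y x"
  using P13[rule_format] by blast
lemmas P14 = conjunct1[OF S14]
lemmas S15 = conjunct2[OF S14]
lemma le_mult: "x \<in> ghosts U \<Longrightarrow> y \<in> ghosts U \<Longrightarrow> z \<in> ghosts U \<Longrightarrow> st_le U x y \<Longrightarrow> st_le U (st_mult U x z) (st_mult U y z)"
  using P14[rule_format] by blast
lemma le_zero: "x \<in> ghosts U \<Longrightarrow> st_le U (st_zero U) x"
  using S15[rule_format] by blast
lemmas one = one1 one2
lemmas zero = zero1 zero2
lemmas ee = ee1 ee2

lemma ghost_iff: "m \<in> ghosts U \<longleftrightarrow> m \<in> st_carrier U \<and> st_mult U (st_e U) m = m"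
proof
  assume "m \<in> ghosts U"
  then obtain u where u: "u \<in> st_carrier U" "m = st_mult U (st_e U) u" unfolding ghosts_def by blast
  show "m \<in> st_carrier U \<and> st_mult U (st_e U) m = m"
  proof (intro conjI)
    show "m \<in> st_carrier U" using u closed ee by simp
    have "st_mult U (st_e U) m = st_mult U (st_mult U (st_e U) (st_e U)) u"
      using u by (simp add: assoc[symmetric] ee)
    thus "st_mult U (st_e U) m = m" using u ee by simp
  qed
next
  assume "m \<in> st_carrier U \<and> st_mult U (st_e U) m = m"
  thus "m \<in> ghosts U" unfolding ghosts_def by (metis image_eqI)
qed

lemma ghostI: "x \<in> st_carrier U \<Longrightarrow> st_mult U (st_e U) x \<in> ghosts U"
  unfolding ghosts_def by blast

lemma ghost_carrier: "m \<in> ghosts U \<Longrightarrow> m \<in> st_carrier U"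
  using ghost_iff by blast

lemma ghost_e: "m \<in> ghosts U \<Longrightarrow> st_mult U (st_e U) m = m"
  using ghost_iff by blast

lemma zero_ghost: "st_zero U \<in> ghosts U"
  using ghost_iff zero ee comm by simp

lemma e_ghost: "st_e U \<in> ghosts U"
  using ghost_iff ee by simp

lemma ghost_mult: "m \<in> ghosts U \<Longrightarrow> x \<in> st_carrier U \<Longrightarrow> st_mult U m x \<in> ghosts U"
  by (simp add: ghost_iff closed assoc[symmetric] ee)

lemma ghost_mult2: "m \<in> ghosts U \<Longrightarrow> x \<in> st_carrier U \<Longrightarrow> st_mult U x m \<in> ghosts U"
  using ghost_mult comm ghost_carrier by simp

lemma e_mult: "x \<in> st_carrier U \<Longrightarrow> y \<in> st_carrier U \<Longrightarrow>
   st_mult U (st_e U) (st_mult U x y) = st_mult U (st_mult U (st_e U) x) y"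
  by (simp add: assoc ee)

lemma tangibles_iff: "x \<in> tangibles U \<longleftrightarrow> x \<in> st_carrier U \<and> x \<notin> ghosts U"
  unfolding tangibles_def by blast

end

lemma trans_ghost:
  assumes "supertropical_monoid U" "transmission U V f" "m \<in> ghosts U"
  shows "f m \<in> ghosts V"
proof -
  interpret stl U using assms(1) by (rule stl.intro)
  obtain u where u: "u \<in> st_carrier U" "m = st_mult U (st_e U) u" using assms(3) unfolding ghosts_def by blast
  have "f m = st_mult V (st_e V) (f u)" using u ee assms(2) unfolding transmission_def by simp
  moreover have "f u \<in> st_carrier V" using u assms(2) unfolding transmission_def by blast
  ultimately show ?thesis unfolding ghosts_def by (rule image_eqI)
qed



locale te = stl U for U :: "('a,'m) stm_scheme" +
  fixes E :: "('a \<times> 'a) set"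
  assumes E_sub: "E \<subseteq> st_carrier U \<times> st_carrier U"
  and E_refl: "x \<in> st_carrier U \<Longrightarrow> (x,x) \<in> E"
  and E_sym: "(x,y) \<in> E \<Longrightarrow> (y,x) \<in> E"
  and E_trans: "(x,y) \<in> E \<Longrightarrow> (y,z) \<in> E \<Longrightarrow> (x,z) \<in> E"
  and E_mult: "(x,x') \<in> E \<Longrightarrow> (y,y') \<in> E \<Longrightarrow> (st_mult U x y, st_mult U x' y') \<in> E"
  and E_zero: "x \<in> st_carrier U \<Longrightarrow> (st_mult U (st_e U) x, st_zero U) \<in> E \<Longrightarrow> (x, st_zero U) \<in> E"
  and E_conv: "a \<in> ghosts U \<Longrightarrow> b \<in> ghosts U \<Longrightarrow> c \<in> ghosts U \<Longrightarrow> st_le U a b \<Longrightarrow>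
     st_le U b c \<Longrightarrow> (a,c) \<in> E \<Longrightarrow> (a,b) \<in> E"
begin

lemma E_carr: "(x,y) \<in> E \<Longrightarrow> x \<in> st_carrier U \<and> y \<in> st_carrier U"
  using E_sub by blast

lemma cls_mem: "x \<in> st_carrier U \<Longrightarrow> x \<in> cls U E x"
  unfolding cls_def using E_refl by blast

lemma cls_memD: "z \<in> cls U E x \<Longrightarrow> z \<in> st_carrier U \<and> (x,z) \<in> E"
  unfolding cls_def by blast

lemma cls_eq: "x \<in> st_carrier U \<Longrightarrow> y \<in> st_carrier U \<Longrightarrow> cls U E x = cls U E y \<longleftrightarrow> (x,y) \<in> E"
proof
  assume "x \<in> st_carrier U" "y \<in> st_carrier U" "cls U E x = cls U E y"
  hence "y \<in> cls U E x" using cls_mem by simp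
  thus "(x,y) \<in> E" using cls_memD by blast
next
  assume "(x,y) \<in> E"
  thus "cls U E x = cls U E y" unfolding cls_def using E_sym E_trans by blast
qed

lemma cls_eqI: "(x,y) \<in> E \<Longrightarrow> cls U E x = cls U E y"
  using cls_eq E_carr by blast

lemma cls_of_mem: "z \<in> cls U E x \<Longrightarrow> cls U E z = cls U E x"
proof -
  assume "z \<in> cls U E x"
  hence "(z,x) \<in> E" using cls_memD E_sym by blast
  thus ?thesis by (rule cls_eqI)
qed

lemma some_cls: "x \<in> st_carrier U \<Longrightarrow> (SOME z. z \<in> cls U E x) \<in> cls U E x"
  using cls_mem by (metis someI)

lemma Q_carrier: "st_carrier (quot_stm U E) = cls U E ` st_carrier U"
  unfolding quot_stm_def by simp
lemma Q_zero: "st_zero (quot_stm U E) = cls U E (st_zero U)"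
  unfolding quot_stm_def by simp
lemma Q_one: "st_one (quot_stm U E) = cls U E (st_one U)"
  unfolding quot_stm_def by simp
lemma Q_e: "st_e (quot_stm U E) = cls U E (st_e U)"
  unfolding quot_stm_def by simp
lemma Q_le: "st_le (quot_stm U E) X Y = (\<exists>a\<in>X \<inter> ghosts U. \<exists>b\<in>Y \<inter> ghosts U. st_le U a b)"
  unfolding quot_stm_def by simp

lemma Q_mult: "x \<in> st_carrier U \<Longrightarrow> y \<in> st_carrier U \<Longrightarrow>
  st_mult (quot_stm U E) (cls U E x) (cls U E y) = cls U E (st_mult U x y)"
proof -
  assume x: "x \<in> st_carrier U" and y: "y \<in> st_carrier U"
  define a where "a = (SOME z. z \<in> cls U E x)"
  define b where "b = (SOME z. z \<in> cls U E y)"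
  have a: "(x,a) \<in> E" using some_cls[OF x] cls_memD unfolding a_def by blast
  have b: "(y,b) \<in> E" using some_cls[OF y] cls_memD unfolding b_def by blast
  have "(st_mult U a b, st_mult U x y) \<in> E" using E_mult[OF a b] E_sym by blast
  hence "cls U E (st_mult U a b) = cls U E (st_mult U x y)" by (rule cls_eqI)
  thus ?thesis unfolding quot_stm_def a_def b_def by simp
qed

lemma Q_ghosts: "ghosts (quot_stm U E) = cls U E ` ghosts U"
proof -
  have "ghosts (quot_stm U E) = (\<lambda>x. st_mult (quot_stm U E) (cls U E (st_e U)) (cls U E x)) ` st_carrier U"
    unfolding ghosts_def Q_carrier Q_e image_comp comp_def by simp
  also have "\<dots> = (\<lambda>x. cls U E (st_mult U (st_e U) x)) ` st_carrier U"
    using Q_mult ee by (intro image_cong) auto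
  also have "\<dots> = cls U E ` ghosts U" unfolding ghosts_def image_comp comp_def by simp
  finally show ?thesis .
qed

lemma Q_le_cls: "a \<in> ghosts U \<Longrightarrow> b \<in> ghosts U \<Longrightarrow> st_le (quot_stm U E) (cls U E a) (cls U E b) \<longleftrightarrow>
  (\<exists>a' b'. a' \<in> ghosts U \<and> b' \<in> ghosts U \<and> (a,a') \<in> E \<and> (b,b') \<in> E \<and> st_le U a' b')"
  unfolding Q_le cls_def Bex_def using ghost_carrier by auto

lemma conv2: "a \<in> ghosts U \<Longrightarrow> b \<in> ghosts U \<Longrightarrow> c \<in> ghosts U \<Longrightarrow> st_le U a b \<Longrightarrow>
     st_le U b c \<Longrightarrow> (a,c) \<in> E \<Longrightarrow> (b,c) \<in> E"
  using E_conv E_sym E_trans by blast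

lemma Q_ghost_cases: "X \<in> ghosts (quot_stm U E) \<Longrightarrow> (\<And>a. a \<in> ghosts U \<Longrightarrow> X = cls U E a \<Longrightarrow> P) \<Longrightarrow> P"
  unfolding Q_ghosts by blast

lemma Q_st: "supertropical_monoid (quot_stm U E)"
proof -
  let ?Q = "quot_stm U E"
  let ?q = "cls U E"
  have gc: "\<And>a. a \<in> ghosts U \<Longrightarrow> a \<in> st_carrier U" by (rule ghost_carrier)
  have c1: "\<forall>X\<in>st_carrier ?Q. \<forall>Y\<in>st_carrier ?Q. st_mult ?Q X Y \<in> st_carrier ?Q"
    unfolding Q_carrier by (auto simp: Q_mult closed)
  have c2: "\<forall>X\<in>st_carrier ?Q. \<forall>Y\<in>st_carrier ?Q. \<forall>Z\<in>st_carrier ?Q.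
        st_mult ?Q (st_mult ?Q X Y) Z = st_mult ?Q X (st_mult ?Q Y Z)"
    unfolding Q_carrier by (auto simp: Q_mult closed assoc)
  have c3: "\<forall>X\<in>st_carrier ?Q. \<forall>Y\<in>st_carrier ?Q. st_mult ?Q X Y = st_mult ?Q Y X"
    unfolding Q_carrier
  proof (intro ballI)
    fix X Y assume "X \<in> ?q ` st_carrier U" "Y \<in> ?q ` st_carrier U"
    then obtain x y where "x \<in> st_carrier U" "y \<in> st_carrier U" "X = ?q x" "Y = ?q y" by blast
    thus "st_mult ?Q X Y = st_mult ?Q Y X" using Q_mult comm by metis
  qed
  have c4: "st_one ?Q \<in> st_carrier ?Q" "\<forall>X\<in>st_carrier ?Q. st_mult ?Q (st_one ?Q) X = X"
    unfolding Q_carrier Q_one by (auto simp: Q_mult one)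
  have c5: "st_zero ?Q \<in> st_carrier ?Q" "\<forall>X\<in>st_carrier ?Q. st_mult ?Q (st_zero ?Q) X = st_zero ?Q"
    unfolding Q_carrier Q_zero by (auto simp: Q_mult zero)
  have c6: "st_e ?Q \<in> st_carrier ?Q" "st_mult ?Q (st_e ?Q) (st_e ?Q) = st_e ?Q"
    unfolding Q_carrier Q_e by (auto simp: Q_mult ee)
  have c7: "\<forall>X\<in>st_carrier ?Q. st_mult ?Q (st_e ?Q) X = st_zero ?Q \<longrightarrow> X = st_zero ?Q"
    unfolding Q_carrier Q_e Q_zero
  proof (intro ballI impI)
    fix X assume "X \<in> ?q ` st_carrier U" and h: "st_mult ?Q (?q (st_e U)) X = ?q (st_zero U)"
    then obtain x where x: "x \<in> st_carrier U" "X = ?q x" by blast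
    have "?q (st_mult U (st_e U) x) = ?q (st_zero U)" using h x Q_mult ee by simp
    hence "(st_mult U (st_e U) x, st_zero U) \<in> E" using cls_eq closed ee zero x by blast
    hence "(x, st_zero U) \<in> E" using E_zero x by blast
    thus "X = ?q (st_zero U)" using x cls_eqI by simp
  qed
  have o1: "\<forall>X\<in>ghosts ?Q. st_le ?Q X X"
    unfolding Q_ghosts using Q_le_cls E_refl gc le_refl by blast
  have o2: "\<forall>X\<in>ghosts ?Q. \<forall>Y\<in>ghosts ?Q. st_le ?Q X Y \<and> st_le ?Q Y X \<longrightarrow> X = Y"
  proof (intro ballI impI)
    fix X Y assume X: "X \<in> ghosts ?Q" and Y: "Y \<in> ghosts ?Q" and h: "st_le ?Q X Y \<and> st_le ?Q Y X"
    obtain a b where ab: "a \<in> ghosts U" "b \<in> ghosts U" "a \<in> X" "b \<in> Y" "st_le U a b"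
      using h unfolding Q_le by blast
    obtain b' a' where ab': "a' \<in> ghosts U" "b' \<in> ghosts U" "a' \<in> X" "b' \<in> Y" "st_le U b' a'"
      using h unfolding Q_le by blast
    obtain x0 where x0: "x0 \<in> ghosts U" "X = ?q x0" using X Q_ghost_cases by blast
    obtain y0 where y0: "y0 \<in> ghosts U" "Y = ?q y0" using Y Q_ghost_cases by blast
    have "(x0,a) \<in> E" "(x0,a') \<in> E" using ab' `a \<in> X` x0 cls_memD by blast+
    hence aa: "(a,a') \<in> E" using E_sym E_trans by blast
    have "(y0,b) \<in> E" "(y0,b') \<in> E" using ab' `b \<in> Y` y0 cls_memD by blast+
    hence bb: "(b,b') \<in> E" using E_sym E_trans by blast
    have "(a,b) \<in> E"
    proof (cases "st_le U b a")
      case True hence "a = b" using le_antisym ab by blast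
      thus ?thesis using E_refl gc ab by blast
    next
      case False
      show ?thesis
      proof (cases "st_le U b' a")
        case True
        have "(b',a) \<in> E" using E_conv[OF ab'(2) ab(1) ab(2) True ab(5)] bb E_sym by blast
        thus ?thesis using bb E_sym E_trans by blast
      next
        case False
        hence "st_le U a b'" using le_total ab ab' by blast
        hence "(a,b') \<in> E" using E_conv[OF ab(1) ab'(2) ab'(1) _ ab'(5) aa] by blast
        thus ?thesis using bb E_sym E_trans by blast
      qed
    qed
    moreover have "X = ?q a" using cls_of_mem `a \<in> X` x0 by simp
    moreover have "Y = ?q b" using cls_of_mem `b \<in> Y` y0 by simp
    ultimately show "X = Y" using cls_eqI by simp
  qed
  have o3: "\<forall>X\<in>ghosts ?Q. \<forall>Y\<in>ghosts ?Q. \<forall>Z\<in>ghosts ?Q. st_le ?Q X Y \<and> st_le ?Q Y Z \<longrightarrow> st_le ?Q X Z"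
  proof (intro ballI impI)
    fix X Y Z assume X: "X \<in> ghosts ?Q" and Y: "Y \<in> ghosts ?Q" and Z: "Z \<in> ghosts ?Q"
      and h: "st_le ?Q X Y \<and> st_le ?Q Y Z"
    obtain a b where ab: "a \<in> ghosts U" "b \<in> ghosts U" "a \<in> X" "b \<in> Y" "st_le U a b"
      using h unfolding Q_le by blast
    obtain b' c where bc: "b' \<in> ghosts U" "c \<in> ghosts U" "b' \<in> Y" "c \<in> Z" "st_le U b' c"
      using h unfolding Q_le by blast
    obtain y0 where y0: "y0 \<in> ghosts U" "Y = ?q y0" using Y Q_ghost_cases by blast
    obtain z0 where z0: "z0 \<in> ghosts U" "Z = ?q z0" using Z Q_ghost_cases by blast
    have "(y0,b) \<in> E" "(y0,b') \<in> E" using ab bc y0 cls_memD by blast+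
    hence bb: "(b',b) \<in> E" using E_sym E_trans by blast
    show "st_le ?Q X Z"
    proof (cases "st_le U b c")
      case True
      hence "st_le U a c" using le_trans ab bc by blast
      thus ?thesis unfolding Q_le using ab bc by blast
    next
      case False
      hence cb: "st_le U c b" using le_total ab bc by blast
      have "(c,b) \<in> E" using conv2[OF bc(1) bc(2) ab(2) bc(5) cb bb] .
      moreover have "(z0,c) \<in> E" using bc z0 cls_memD by blast
      ultimately have "(z0,b) \<in> E" using E_trans by blast
      hence "b \<in> Z" using z0 ab gc unfolding cls_def by blast
      thus ?thesis unfolding Q_le using ab by blast
    qed
  qed
  have o4: "\<forall>X\<in>ghosts ?Q. \<forall>Y\<in>ghosts ?Q. st_le ?Q X Y \<or> st_le ?Q Y X"
  proof (intro ballI)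
    fix X Y assume X: "X \<in> ghosts ?Q" and Y: "Y \<in> ghosts ?Q"
    obtain a where a: "a \<in> ghosts U" "X = ?q a" using X Q_ghost_cases by blast
    obtain b where b: "b \<in> ghosts U" "Y = ?q b" using Y Q_ghost_cases by blast
    have "a \<in> X" "b \<in> Y" using a b cls_mem gc by blast+
    thus "st_le ?Q X Y \<or> st_le ?Q Y X" unfolding Q_le using le_total a b by blast
  qed
  have o5: "\<forall>X\<in>ghosts ?Q. \<forall>Y\<in>ghosts ?Q. \<forall>Z\<in>ghosts ?Q.
        st_le ?Q X Y \<longrightarrow> st_le ?Q (st_mult ?Q X Z) (st_mult ?Q Y Z)"
  proof (intro ballI impI)
    fix X Y Z assume X: "X \<in> ghosts ?Q" and Y: "Y \<in> ghosts ?Q" and Z: "Z \<in> ghosts ?Q"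
      and h: "st_le ?Q X Y"
    obtain a b where ab: "a \<in> ghosts U" "b \<in> ghosts U" "a \<in> X" "b \<in> Y" "st_le U a b"
      using h unfolding Q_le by blast
    obtain x0 where x0: "x0 \<in> ghosts U" "X = ?q x0" using X Q_ghost_cases by blast
    obtain y0 where y0: "y0 \<in> ghosts U" "Y = ?q y0" using Y Q_ghost_cases by blast
    obtain c where c: "c \<in> ghosts U" "Z = ?q c" using Z Q_ghost_cases by blast
    have Xa: "X = ?q a" using cls_of_mem ab x0 by simp
    have Yb: "Y = ?q b" using cls_of_mem ab y0 by simp
    have 1: "st_mult ?Q X Z = ?q (st_mult U a c)" using Xa c Q_mult gc ab by simp
    have 2: "st_mult ?Q Y Z = ?q (st_mult U b c)" using Yb c Q_mult gc ab by simp
    have g1: "st_mult U a c \<in> ghosts U" "st_mult U b c \<in> ghosts U" using ghost_mult ab c gc by blast+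
    have "st_mult U a c \<in> ?q (st_mult U a c)" "st_mult U b c \<in> ?q (st_mult U b c)"
      using cls_mem g1 gc by blast+
    moreover have "st_le U (st_mult U a c) (st_mult U b c)" using le_mult ab c by blast
    ultimately show "st_le ?Q (st_mult ?Q X Z) (st_mult ?Q Y Z)" unfolding 1 2 Q_le using g1 by blast
  qed
  have o6: "\<forall>X\<in>ghosts ?Q. st_le ?Q (st_zero ?Q) X"
  proof
    fix X assume X: "X \<in> ghosts ?Q"
    obtain a where a: "a \<in> ghosts U" "X = ?q a" using X Q_ghost_cases by blast
    have "a \<in> X" using a cls_mem gc by blast
    moreover have "st_zero U \<in> st_zero ?Q" unfolding Q_zero using cls_mem zero by blast
    ultimately show "st_le ?Q (st_zero ?Q) X" unfolding Q_le using zero_ghost le_zero a by blast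
  qed
  show ?thesis unfolding supertropical_monoid_def
    using c1 c2 c3 c4 c5 c6 c7 o1 o2 o3 o4 o5 o6 by blast
qed

lemma q_trans: "transmission U (quot_stm U E) (cls U E)"
  unfolding transmission_def
proof (intro conjI ballI impI)
  show "cls U E ` st_carrier U \<subseteq> st_carrier (quot_stm U E)" using Q_carrier by simp
  show "cls U E (st_zero U) = st_zero (quot_stm U E)" using Q_zero by simp
  show "cls U E (st_one U) = st_one (quot_stm U E)" using Q_one by simp
  show "cls U E (st_e U) = st_e (quot_stm U E)" using Q_e by simp
  fix x y
  show "x \<in> st_carrier U \<Longrightarrow> y \<in> st_carrier U \<Longrightarrow>
    cls U E (st_mult U x y) = st_mult (quot_stm U E) (cls U E x) (cls U E y)" using Q_mult by simp
  show "x \<in> ghosts U \<Longrightarrow> y \<in> ghosts U \<Longrightarrow> st_le U x y \<Longrightarrow> st_le (quot_stm U E) (cls U E x) (cls U E y)"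
    unfolding Q_le using cls_mem ghost_carrier by blast
qed

end


locale fac = U: stl U + V: stl V for U :: "('a,'m) stm_scheme" and V :: "('b,'n) stm_scheme" +
  fixes \<alpha> :: "'a \<Rightarrow> 'b"
  assumes trans: "transmission U V \<alpha>" and surj: "\<alpha> ` st_carrier U = st_carrier V"
begin

lemma al_C: "x \<in> st_carrier U \<Longrightarrow> \<alpha> x \<in> st_carrier V"
  using trans unfolding transmission_def by blast
lemma al_mult: "x \<in> st_carrier U \<Longrightarrow> y \<in> st_carrier U \<Longrightarrow> \<alpha> (st_mult U x y) = st_mult V (\<alpha> x) (\<alpha> y)"
  using trans unfolding transmission_def by blast
lemma al_zero: "\<alpha> (st_zero U) = st_zero V"
  using trans unfolding transmission_def by blast
lemma al_one: "\<alpha> (st_one U) = st_one V"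
  using trans unfolding transmission_def by blast
lemma al_e: "\<alpha> (st_e U) = st_e V"
  using trans unfolding transmission_def by blast
lemma al_le: "x \<in> ghosts U \<Longrightarrow> y \<in> ghosts U \<Longrightarrow> st_le U x y \<Longrightarrow> st_le V (\<alpha> x) (\<alpha> y)"
  using trans unfolding transmission_def by blast
lemma al_ghost: "m \<in> ghosts U \<Longrightarrow> \<alpha> m \<in> ghosts V"
  using trans_ghost[OF U.st trans] .
lemma al_ex: "x \<in> st_carrier U \<Longrightarrow> \<alpha> (st_mult U (st_e U) x) = st_mult V (st_e V) (\<alpha> x)"
  using al_mult al_e U.ee by simp

definition "A = ghost_kernel U V \<alpha>"

lemma A_iff: "x \<in> A \<longleftrightarrow> x \<in> st_carrier U \<and> \<alpha> x \<in> ghosts V"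
  unfolding A_def ghost_kernel_def by blast

lemma ghosts_A: "m \<in> ghosts U \<Longrightarrow> m \<in> A"
  using A_iff al_ghost U.ghost_carrier by blast

lemma A_C: "x \<in> A \<Longrightarrow> x \<in> st_carrier U"
  using A_iff by blast

lemma A_ideal: "x \<in> A \<Longrightarrow> y \<in> st_carrier U \<Longrightarrow> st_mult U x y \<in> A"
  using A_iff al_mult al_C V.ghost_mult U.closed by simp

lemma A_ideal2: "x \<in> A \<Longrightarrow> y \<in> st_carrier U \<Longrightarrow> st_mult U y x \<in> A"
  using A_ideal U.comm A_C by metis

lemma A_al: "x \<in> A \<Longrightarrow> \<alpha> (st_mult U (st_e U) x) = \<alpha> x"
  using al_ex A_iff V.ghost_e by simp

lemma zero_A: "\<alpha> x = st_zero V \<Longrightarrow> x \<in> st_carrier U \<Longrightarrow> x \<in> A"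
  using A_iff V.zero_ghost by simp

abbreviation "E \<equiv> rel_E U A"

lemma E_iff: "(x,y) \<in> E \<longleftrightarrow> x \<in> st_carrier U \<and> y \<in> st_carrier U \<and>
     (x = y \<or> (x \<in> A \<and> y \<in> A \<and> st_mult U (st_e U) x = st_mult U (st_e U) y))"
  unfolding rel_E_def by simp

lemma e_split: "x \<in> st_carrier U \<Longrightarrow> y \<in> st_carrier U \<Longrightarrow>
  st_mult U (st_e U) (st_mult U x y) = st_mult U (st_mult U (st_e U) x) (st_mult U (st_e U) y)"
proof -
  assume x: "x \<in> st_carrier U" and y: "y \<in> st_carrier U"
  have "st_mult U (st_mult U (st_e U) x) (st_mult U (st_e U) y)
      = st_mult U (st_e U) (st_mult U x (st_mult U (st_e U) y))"
    using x y U.ee U.closed U.assoc by simp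
  also have "st_mult U x (st_mult U (st_e U) y) = st_mult U (st_e U) (st_mult U x y)"
    using x y U.ee U.closed U.assoc U.comm by metis
  also have "st_mult U (st_e U) (st_mult U (st_e U) (st_mult U x y)) = st_mult U (st_e U) (st_mult U x y)"
    using x y U.ee U.closed U.assoc[symmetric] by simp
  finally show ?thesis by simp
qed

lemma E_te: "te U E"
proof (unfold_locales)
  show "E \<subseteq> st_carrier U \<times> st_carrier U" using E_iff by auto
  show "\<And>x. x \<in> st_carrier U \<Longrightarrow> (x, x) \<in> E" using E_iff by simp
  show "\<And>x y. (x, y) \<in> E \<Longrightarrow> (y, x) \<in> E" using E_iff by auto
  show "\<And>x y z. (x, y) \<in> E \<Longrightarrow> (y, z) \<in> E \<Longrightarrow> (x, z) \<in> E" using E_iff by auto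
  show "\<And>x x' y y'. (x, x') \<in> E \<Longrightarrow> (y, y') \<in> E \<Longrightarrow> (st_mult U x y, st_mult U x' y') \<in> E"
  proof -
    fix x x' y y' assume h1: "(x, x') \<in> E" and h2: "(y, y') \<in> E"
    have c: "x \<in> st_carrier U" "x' \<in> st_carrier U" "y \<in> st_carrier U" "y' \<in> st_carrier U"
      using h1 h2 E_iff by auto
    have ex: "st_mult U (st_e U) x = st_mult U (st_e U) x'" and ey: "st_mult U (st_e U) y = st_mult U (st_e U) y'"
      using h1 h2 E_iff by auto
    have ee: "st_mult U (st_e U) (st_mult U x y) = st_mult U (st_e U) (st_mult U x' y')"
      using e_split c ex ey by simp
    show "(st_mult U x y, st_mult U x' y') \<in> E"
    proof (cases "x = x' \<and> y = y'")
      case True thus ?thesis using E_iff c U.closed by simp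
    next
      case False
      hence "(x \<in> A \<and> x' \<in> A) \<or> (y \<in> A \<and> y' \<in> A)" using h1 h2 E_iff by auto
      hence "st_mult U x y \<in> A \<and> st_mult U x' y' \<in> A" using A_ideal A_ideal2 c by blast
      thus ?thesis using E_iff ee c U.closed by simp
    qed
  qed
  show "\<And>x. x \<in> st_carrier U \<Longrightarrow> (st_mult U (st_e U) x, st_zero U) \<in> E \<Longrightarrow> (x, st_zero U) \<in> E"
  proof -
    fix x assume x: "x \<in> st_carrier U" and h: "(st_mult U (st_e U) x, st_zero U) \<in> E"
    have "st_mult U (st_e U) x = st_zero U"
    proof -
      have "st_mult U (st_e U) x = st_zero U \<or> st_mult U (st_e U) (st_mult U (st_e U) x) = st_mult U (st_e U) (st_zero U)"
        using h E_iff by auto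
      moreover have "st_mult U (st_e U) (st_mult U (st_e U) x) = st_mult U (st_e U) x"
        using U.ghost_e U.ghostI x by blast
      moreover have "st_mult U (st_e U) (st_zero U) = st_zero U" using U.ghost_e U.zero_ghost by blast
      ultimately show ?thesis by auto
    qed
    hence "x = st_zero U" using U.e0 x by blast
    thus "(x, st_zero U) \<in> E" using E_iff x by simp
  qed
  show "\<And>a b c. a \<in> ghosts U \<Longrightarrow> b \<in> ghosts U \<Longrightarrow> c \<in> ghosts U \<Longrightarrow> st_le U a b \<Longrightarrow>
     st_le U b c \<Longrightarrow> (a,c) \<in> E \<Longrightarrow> (a,b) \<in> E"
  proof -
    fix a b c assume g: "a \<in> ghosts U" "b \<in> ghosts U" "c \<in> ghosts U" and l: "st_le U a b" "st_le U b c"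
      and h: "(a,c) \<in> E"
    have "a = c" using h E_iff U.ghost_e g by auto
    hence "a = b" using U.le_antisym g l by blast
    thus "(a,b) \<in> E" using E_iff g U.ghost_carrier by simp
  qed
qed

end

sublocale fac \<subseteq> UE: te U E by (rule E_te)

context fac begin

abbreviation "q \<equiv> cls U E"
abbreviation "Ub \<equiv> quot_stm U E"
definition "g = (\<lambda>X. \<alpha> (SOME x. x \<in> X \<inter> ghosts U))"
abbreviation "F \<equiv> rel_F Ub g (st_zero V)"

lemma Ub_st: "supertropical_monoid Ub" by (rule UE.Q_st)

lemma q_eq: "x \<in> st_carrier U \<Longrightarrow> y \<in> st_carrier U \<Longrightarrow> q x = q y \<longleftrightarrow>
   (x = y \<or> (x \<in> A \<and> y \<in> A \<and> st_mult U (st_e U) x = st_mult U (st_e U) y))"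
  using UE.cls_eq E_iff by simp

lemma q_ex: "x \<in> A \<Longrightarrow> q x = q (st_mult U (st_e U) x)"
proof -
  assume x: "x \<in> A"
  have c: "x \<in> st_carrier U" "st_mult U (st_e U) x \<in> ghosts U" using x A_C U.ghostI by auto
  thus ?thesis using q_eq x ghosts_A U.ghost_carrier U.ghost_e by simp
qed

lemma q_A: "x \<in> st_carrier U \<Longrightarrow> q x \<in> ghosts Ub \<longleftrightarrow> x \<in> A"
proof
  assume x: "x \<in> st_carrier U" and "q x \<in> ghosts Ub"
  then obtain m where m: "m \<in> ghosts U" "q x = q m" using UE.Q_ghosts by auto
  thus "x \<in> A" using q_eq[of x m] x U.ghost_carrier[OF m(1)] ghosts_A[OF m(1)] by auto
next
  assume x: "x \<in> st_carrier U" and "x \<in> A"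
  thus "q x \<in> ghosts Ub" using q_ex UE.Q_ghosts U.ghostI by auto
qed

lemma q_al: "x \<in> st_carrier U \<Longrightarrow> y \<in> st_carrier U \<Longrightarrow> q x = q y \<Longrightarrow> \<alpha> x = \<alpha> y"
  using q_eq[of x y] A_al[of x] A_al[of y] by auto

lemma q_ghost_inj: "a \<in> ghosts U \<Longrightarrow> b \<in> ghosts U \<Longrightarrow> q a = q b \<longleftrightarrow> a = b"
  using q_eq[of a b] U.ghost_carrier U.ghost_e by auto

lemma cls_ghost: "m \<in> ghosts U \<Longrightarrow> q m \<inter> ghosts U = {m}"
proof -
  assume m: "m \<in> ghosts U"
  have "\<And>y. y \<in> q m \<inter> ghosts U \<Longrightarrow> y = m"
  proof -
    fix y assume "y \<in> q m \<inter> ghosts U"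
    hence "y \<in> ghosts U" "q y = q m" using UE.cls_of_mem by auto
    thus "y = m" using q_ghost_inj m by blast
  qed
  moreover have "m \<in> q m" using UE.cls_mem m U.ghost_carrier by blast
  ultimately show ?thesis using m by blast
qed

lemma g_ghost: "m \<in> ghosts U \<Longrightarrow> g (q m) = \<alpha> m"
  unfolding g_def using cls_ghost by simp

lemma g_A: "x \<in> A \<Longrightarrow> g (q x) = \<alpha> x"
  using q_ex[of x] g_ghost[of "st_mult U (st_e U) x"] A_al[of x] U.ghostI A_C[of x] by simp

lemma Ub_carrier: "st_carrier Ub = q ` st_carrier U" by (rule UE.Q_carrier)

lemma Ub_ex: "x \<in> st_carrier U \<Longrightarrow> st_mult Ub (st_e Ub) (q x) = q (st_mult U (st_e U) x)"
  using UE.Q_e UE.Q_mult U.ee by simp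

lemma g_ex: "x \<in> st_carrier U \<Longrightarrow> g (st_mult Ub (st_e Ub) (q x)) = st_mult V (st_e V) (\<alpha> x)"
  using Ub_ex g_ghost U.ghostI al_ex by simp

lemma ex_zero_iff: "x \<in> st_carrier U \<Longrightarrow> st_mult V (st_e V) (\<alpha> x) = st_zero V \<longleftrightarrow> \<alpha> x = st_zero V"
  using V.e0[OF al_C] V.ghost_e[OF V.zero_ghost] by auto

lemma F_rep: "x \<in> st_carrier U \<Longrightarrow> y \<in> st_carrier U \<Longrightarrow> (q x, q y) \<in> F \<longleftrightarrow>
   (q x = q y \<or> (x \<in> A \<and> y \<in> A \<and> \<alpha> x = \<alpha> y))"
proof -
  assume x: "x \<in> st_carrier U" and y: "y \<in> st_carrier U"
  have cx: "q x \<in> st_carrier Ub" "q y \<in> st_carrier Ub" using x y Ub_carrier by auto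
  have "(q x, q y) \<in> F \<longleftrightarrow> (q x = q y \<or> (q x \<in> ghosts Ub \<and> q y \<in> ghosts Ub \<and> g (q x) = g (q y)) \<or>
      (g (st_mult Ub (st_e Ub) (q x)) = st_zero V \<and> g (st_mult Ub (st_e Ub) (q y)) = st_zero V))"
    unfolding rel_F_def using cx by simp
  also have "\<dots> \<longleftrightarrow> (q x = q y \<or> (x \<in> A \<and> y \<in> A \<and> \<alpha> x = \<alpha> y) \<or>
      (\<alpha> x = st_zero V \<and> \<alpha> y = st_zero V))"
    using q_A[OF x] q_A[OF y] g_A[of x] g_A[of y] g_ex[OF x] g_ex[OF y] ex_zero_iff[OF x] ex_zero_iff[OF y] by auto
  also have "\<dots> \<longleftrightarrow> (q x = q y \<or> (x \<in> A \<and> y \<in> A \<and> \<alpha> x = \<alpha> y))"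
    using zero_A[OF _ x] zero_A[OF _ y] by auto
  finally show ?thesis .
qed

lemma F_sub: "(X,Y) \<in> F \<Longrightarrow> X \<in> st_carrier Ub \<and> Y \<in> st_carrier Ub"
  unfolding rel_F_def by simp

lemma Ub_le_cls: "a \<in> ghosts U \<Longrightarrow> b \<in> ghosts U \<Longrightarrow> st_le Ub (q a) (q b) \<longleftrightarrow> st_le U a b"
proof -
  assume a: "a \<in> ghosts U" and b: "b \<in> ghosts U"
  have i: "\<And>a a'. a \<in> ghosts U \<Longrightarrow> a' \<in> ghosts U \<Longrightarrow> (a,a') \<in> E \<longleftrightarrow> a = a'"
    using E_iff U.ghost_carrier U.ghost_e by auto
  show ?thesis
  proof
    assume "st_le Ub (q a) (q b)"
    then obtain a' b' where "a' \<in> ghosts U" "b' \<in> ghosts U" "(a,a') \<in> E" "(b,b') \<in> E" "st_le U a' b'"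
      using UE.Q_le_cls a b by blast
    thus "st_le U a b" using i a b by blast
  next
    assume "st_le U a b"
    thus "st_le Ub (q a) (q b)" using UE.Q_le_cls[OF a b] i a b by blast
  qed
qed


lemma Ub_cases: "X \<in> st_carrier Ub \<Longrightarrow> (\<And>x. x \<in> st_carrier U \<Longrightarrow> X = q x \<Longrightarrow> P) \<Longrightarrow> P"
  using Ub_carrier by blast

lemma Ub_mult: "x \<in> st_carrier U \<Longrightarrow> y \<in> st_carrier U \<Longrightarrow> st_mult Ub (q x) (q y) = q (st_mult U x y)"
  by (rule UE.Q_mult)

lemma F_te: "te Ub F"
proof (unfold_locales)
  show "F \<subseteq> st_carrier Ub \<times> st_carrier Ub" using F_sub by auto
  show "supertropical_monoid Ub" by (rule Ub_st)
  show "\<And>X. X \<in> st_carrier Ub \<Longrightarrow> (X, X) \<in> F"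
    by (erule Ub_cases) (simp add: F_rep)
  show "\<And>X Y. (X, Y) \<in> F \<Longrightarrow> (Y, X) \<in> F"
  proof -
    fix X Y assume h: "(X,Y) \<in> F"
    obtain x where x: "x \<in> st_carrier U" "X = q x" using F_sub[OF h] Ub_carrier by blast
    obtain y where y: "y \<in> st_carrier U" "Y = q y" using F_sub[OF h] Ub_carrier by blast
    have "q x = q y \<or> (x \<in> A \<and> y \<in> A \<and> \<alpha> x = \<alpha> y)" using h x y F_rep by simp
    hence "q y = q x \<or> (y \<in> A \<and> x \<in> A \<and> \<alpha> y = \<alpha> x)" by auto
    thus "(Y,X) \<in> F" using x y F_rep by simp
  qed
  show "\<And>X Y Z. (X, Y) \<in> F \<Longrightarrow> (Y, Z) \<in> F \<Longrightarrow> (X, Z) \<in> F"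
  proof -
    fix X Y Z assume h1: "(X,Y) \<in> F" and h2: "(Y,Z) \<in> F"
    obtain x where x: "x \<in> st_carrier U" "X = q x" using F_sub[OF h1] Ub_carrier by blast
    obtain y where y: "y \<in> st_carrier U" "Y = q y" using F_sub[OF h1] Ub_carrier by blast
    obtain z where z: "z \<in> st_carrier U" "Z = q z" using F_sub[OF h2] Ub_carrier by blast
    have c: "x \<in> st_carrier U" "y \<in> st_carrier U" "z \<in> st_carrier U" using x y z by simp_all
    have e: "X = q x" "Y = q y" "Z = q z" using x y z by simp_all
    have r1: "q x = q y \<or> (x \<in> A \<and> y \<in> A \<and> \<alpha> x = \<alpha> y)" using h1 F_rep c e by simp
    have r2: "q y = q z \<or> (y \<in> A \<and> z \<in> A \<and> \<alpha> y = \<alpha> z)" using h2 F_rep c e by simp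
    have qA: "\<And>u v. u \<in> st_carrier U \<Longrightarrow> v \<in> st_carrier U \<Longrightarrow> q u = q v \<Longrightarrow> (u \<in> A \<longleftrightarrow> v \<in> A)"
    proof -
      fix u v assume u: "u \<in> st_carrier U" and v: "v \<in> st_carrier U" and uv: "q u = q v"
      show "u \<in> A \<longleftrightarrow> v \<in> A" using q_A[OF u] q_A[OF v] uv by simp
    qed
    have q1: "q x = q y \<Longrightarrow> (x \<in> A \<longleftrightarrow> y \<in> A) \<and> \<alpha> x = \<alpha> y"
      using qA[OF c(1) c(2)] q_al[OF c(1) c(2)] by blast
    have q2: "q y = q z \<Longrightarrow> (y \<in> A \<longleftrightarrow> z \<in> A) \<and> \<alpha> y = \<alpha> z"
      using qA[OF c(2) c(3)] q_al[OF c(2) c(3)] by blast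
    have "q x = q z \<or> (x \<in> A \<and> z \<in> A \<and> \<alpha> x = \<alpha> z)"
    proof (cases "q x = q y")
      case True thus ?thesis using r2 q1 by auto
    next
      case False thus ?thesis using r1 r2 q2 by auto
    qed
    thus "(X,Z) \<in> F" using F_rep c e by simp
  qed
  show "\<And>X X' Y Y'. (X, X') \<in> F \<Longrightarrow> (Y, Y') \<in> F \<Longrightarrow> (st_mult Ub X Y, st_mult Ub X' Y') \<in> F"
  proof -
    fix X X' Y Y' assume h1: "(X,X') \<in> F" and h2: "(Y,Y') \<in> F"
    obtain x where x: "x \<in> st_carrier U" "X = q x" using F_sub[OF h1] Ub_carrier by blast
    obtain x' where x': "x' \<in> st_carrier U" "X' = q x'" using F_sub[OF h1] Ub_carrier by blast
    obtain y where y: "y \<in> st_carrier U" "Y = q y" using F_sub[OF h2] Ub_carrier by blast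
    obtain y' where y': "y' \<in> st_carrier U" "Y' = q y'" using F_sub[OF h2] Ub_carrier by blast
    have c1: "x \<in> st_carrier U" "x' \<in> st_carrier U" "X = q x" "X' = q x'" using x x' by simp_all
    have c2: "y \<in> st_carrier U" "y' \<in> st_carrier U" "Y = q y" "Y' = q y'" using y y' by simp_all
    have r1: "q x = q x' \<or> (x \<in> A \<and> x' \<in> A \<and> \<alpha> x = \<alpha> x')" using h1 F_rep c1 by simp
    have r2: "q y = q y' \<or> (y \<in> A \<and> y' \<in> A \<and> \<alpha> y = \<alpha> y')" using h2 F_rep c2 by simp
    have a1: "\<alpha> x = \<alpha> x'" using r1 q_al c1 by blast
    have a2: "\<alpha> y = \<alpha> y'" using r2 q_al c2 by blast
    have m: "st_mult Ub X Y = q (st_mult U x y)" "st_mult Ub X' Y' = q (st_mult U x' y')"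
      using Ub_mult c1 c2 by simp_all
    have cc: "st_mult U x y \<in> st_carrier U" "st_mult U x' y' \<in> st_carrier U" using U.closed c1 c2 by simp_all
    have "q (st_mult U x y) = q (st_mult U x' y') \<or>
      (st_mult U x y \<in> A \<and> st_mult U x' y' \<in> A \<and> \<alpha> (st_mult U x y) = \<alpha> (st_mult U x' y'))"
    proof (cases "q x = q x' \<and> q y = q y'")
      case True
      hence "q (st_mult U x y) = q (st_mult U x' y')"
        using Ub_mult[OF c1(1) c2(1), symmetric] Ub_mult[OF c1(2) c2(2), symmetric] by simp
      thus ?thesis by simp
    next
      case False
      hence "(x \<in> A \<and> x' \<in> A) \<or> (y \<in> A \<and> y' \<in> A)" using r1 r2 by blast
      hence "st_mult U x y \<in> A \<and> st_mult U x' y' \<in> A" using A_ideal A_ideal2 c1 c2 by blast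
      moreover have "\<alpha> (st_mult U x y) = \<alpha> (st_mult U x' y')" using al_mult c1 c2 a1 a2 by simp
      ultimately show ?thesis by simp
    qed
    thus "(st_mult Ub X Y, st_mult Ub X' Y') \<in> F" using F_rep cc m by simp
  qed
  show "\<And>X. X \<in> st_carrier Ub \<Longrightarrow> (st_mult Ub (st_e Ub) X, st_zero Ub) \<in> F \<Longrightarrow> (X, st_zero Ub) \<in> F"
  proof -
    fix X assume X: "X \<in> st_carrier Ub" and h: "(st_mult Ub (st_e Ub) X, st_zero Ub) \<in> F"
    obtain x where x: "x \<in> st_carrier U" "X = q x" using X Ub_carrier by blast
    have z: "st_zero Ub = q (st_zero U)" by (rule UE.Q_zero)
    have ex: "st_mult U (st_e U) x \<in> st_carrier U" using U.closed U.ee x by simp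
    have "q (st_mult U (st_e U) x) = q (st_zero U) \<or> (st_mult U (st_e U) x \<in> A \<and> st_zero U \<in> A \<and>
       \<alpha> (st_mult U (st_e U) x) = \<alpha> (st_zero U))"
      using h F_rep[OF ex U.zero(1)] Ub_ex x z by simp
    thus "(X, st_zero Ub) \<in> F"
    proof
      assume "q (st_mult U (st_e U) x) = q (st_zero U)"
      hence "(st_mult U (st_e U) x, st_zero U) \<in> E" using UE.cls_eq ex U.zero by blast
      hence "(x, st_zero U) \<in> E" using UE.E_zero x by blast
      hence "q x = q (st_zero U)" by (rule UE.cls_eqI)
      thus ?thesis using F_rep x U.zero z by simp
    next
      assume "st_mult U (st_e U) x \<in> A \<and> st_zero U \<in> A \<and> \<alpha> (st_mult U (st_e U) x) = \<alpha> (st_zero U)"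
      hence "\<alpha> x = st_zero V" using al_ex x al_zero ex_zero_iff by simp
      hence "x \<in> A" "\<alpha> x = \<alpha> (st_zero U)" using zero_A x al_zero by auto
      thus ?thesis using F_rep x U.zero z ghosts_A U.zero_ghost by simp
    qed
  qed
  show "\<And>X Y Z. X \<in> ghosts Ub \<Longrightarrow> Y \<in> ghosts Ub \<Longrightarrow> Z \<in> ghosts Ub \<Longrightarrow> st_le Ub X Y \<Longrightarrow>
     st_le Ub Y Z \<Longrightarrow> (X,Z) \<in> F \<Longrightarrow> (X,Y) \<in> F"
  proof -
    fix X Y Z assume X: "X \<in> ghosts Ub" and Y: "Y \<in> ghosts Ub" and Z: "Z \<in> ghosts Ub"
      and l1: "st_le Ub X Y" and l2: "st_le Ub Y Z" and h: "(X,Z) \<in> F"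
    obtain a where a: "a \<in> ghosts U" "X = q a" using X UE.Q_ghosts by auto
    obtain b where b: "b \<in> ghosts U" "Y = q b" using Y UE.Q_ghosts by auto
    obtain c where c: "c \<in> ghosts U" "Z = q c" using Z UE.Q_ghosts by auto
    have ab: "st_le U a b" using l1 a b Ub_le_cls by simp
    have bc: "st_le U b c" using l2 b c Ub_le_cls by simp
    have "q a = q c \<or> \<alpha> a = \<alpha> c" using h a c F_rep U.ghost_carrier by auto
    hence "\<alpha> a = \<alpha> c"
      using q_al U.ghost_carrier a c by blast
    moreover have "st_le V (\<alpha> a) (\<alpha> b)" "st_le V (\<alpha> b) (\<alpha> c)" using al_le a b c ab bc by auto
    ultimately have "\<alpha> a = \<alpha> b" using V.le_antisym[OF al_ghost[OF a(1)] al_ghost[OF b(1)]] by simp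
    thus "(X,Y) \<in> F" using F_rep a b U.ghost_carrier ghosts_A by simp
  qed
qed

end

sublocale fac \<subseteq> UF: te Ub F by (rule F_te)


context fac begin

abbreviation "W \<equiv> quot_stm Ub F"
abbreviation "p \<equiv> cls Ub F"
definition "r x = p (q x)"

lemma W_st: "supertropical_monoid W" by (rule UF.Q_st)

lemma q_C: "x \<in> st_carrier U \<Longrightarrow> q x \<in> st_carrier Ub" using Ub_carrier by simp

lemma r_eq: "x \<in> st_carrier U \<Longrightarrow> y \<in> st_carrier U \<Longrightarrow> r x = r y \<longleftrightarrow>
   (q x = q y \<or> (x \<in> A \<and> y \<in> A \<and> \<alpha> x = \<alpha> y))"
  unfolding r_def using UF.cls_eq[OF q_C q_C] F_rep by simp

lemma r_al: "x \<in> st_carrier U \<Longrightarrow> y \<in> st_carrier U \<Longrightarrow> r x = r y \<Longrightarrow> \<alpha> x = \<alpha> y"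
  using r_eq q_al by blast

lemma W_carrier: "st_carrier W = r ` st_carrier U"
  unfolding UF.Q_carrier Ub_carrier image_comp r_def comp_def by simp

lemma W_mult: "x \<in> st_carrier U \<Longrightarrow> y \<in> st_carrier U \<Longrightarrow> st_mult W (r x) (r y) = r (st_mult U x y)"
  unfolding r_def using UF.Q_mult[OF q_C q_C] Ub_mult by simp

lemma W_zero: "st_zero W = r (st_zero U)" unfolding r_def UF.Q_zero UE.Q_zero ..
lemma W_one: "st_one W = r (st_one U)" unfolding r_def UF.Q_one UE.Q_one ..
lemma W_e: "st_e W = r (st_e U)" unfolding r_def UF.Q_e UE.Q_e ..

lemma W_ghosts: "ghosts W = r ` ghosts U"
  unfolding UF.Q_ghosts UE.Q_ghosts image_comp r_def comp_def by simp

lemma r_ghost_iff: "x \<in> st_carrier U \<Longrightarrow> r x \<in> ghosts W \<longleftrightarrow> x \<in> A"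
proof
  assume x: "x \<in> st_carrier U" and "r x \<in> ghosts W"
  then obtain m where m: "m \<in> ghosts U" "r x = r m" using W_ghosts by auto
  have mC: "m \<in> st_carrier U" using m U.ghost_carrier by blast
  have "q x = q m \<or> x \<in> A" using r_eq[OF x mC] m by auto
  moreover have "q m \<in> ghosts Ub" using m UE.Q_ghosts by auto
  ultimately show "x \<in> A" using q_A[OF x] by auto
next
  assume x: "x \<in> st_carrier U" and "x \<in> A"
  hence "r x = r (st_mult U (st_e U) x)" unfolding r_def using q_ex by simp
  thus "r x \<in> ghosts W" using W_ghosts U.ghostI x by auto
qed

lemma W_le_D: "a \<in> ghosts U \<Longrightarrow> b \<in> ghosts U \<Longrightarrow> st_le W (r a) (r b) \<Longrightarrow> st_le V (\<alpha> a) (\<alpha> b)"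
proof -
  assume a: "a \<in> ghosts U" and b: "b \<in> ghosts U" and h: "st_le W (r a) (r b)"
  have ga: "q a \<in> ghosts Ub" and gb: "q b \<in> ghosts Ub" using a b UE.Q_ghosts by auto
  have h': "st_le W (p (q a)) (p (q b))" using h unfolding r_def .
  have "\<exists>A' B'. A' \<in> ghosts Ub \<and> B' \<in> ghosts Ub \<and> (q a, A') \<in> F \<and> (q b, B') \<in> F \<and> st_le Ub A' B'"
    using UF.Q_le_cls[OF ga gb] h' by simp
  then obtain A' B' where AB: "A' \<in> ghosts Ub" "B' \<in> ghosts Ub" "(q a, A') \<in> F" "(q b, B') \<in> F"
      "st_le Ub A' B'" by blast
  obtain a' where a': "a' \<in> ghosts U" "A' = q a'" using AB(1) UE.Q_ghosts by auto
  obtain b' where b': "b' \<in> ghosts U" "B' = q b'" using AB(2) UE.Q_ghosts by auto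
  have gc: "a \<in> st_carrier U" "b \<in> st_carrier U" "a' \<in> st_carrier U" "b' \<in> st_carrier U"
    using a b a' b' U.ghost_carrier by auto
  have "q a = q a' \<or> (a \<in> A \<and> a' \<in> A \<and> \<alpha> a = \<alpha> a')" using AB(3) a'(2) F_rep[OF gc(1) gc(3)] by simp
  hence 1: "\<alpha> a = \<alpha> a'" using q_al[OF gc(1) gc(3)] by blast
  have "q b = q b' \<or> (b \<in> A \<and> b' \<in> A \<and> \<alpha> b = \<alpha> b')" using AB(4) b'(2) F_rep[OF gc(2) gc(4)] by simp
  hence 2: "\<alpha> b = \<alpha> b'" using q_al[OF gc(2) gc(4)] by blast
  have "st_le U a' b'" using AB(5) a' b' Ub_le_cls by simp
  hence "st_le V (\<alpha> a') (\<alpha> b')" using al_le a' b' by blast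
  thus ?thesis using 1 2 by simp
qed

lemma W_le_I: "a \<in> ghosts U \<Longrightarrow> b \<in> ghosts U \<Longrightarrow> st_le V (\<alpha> a) (\<alpha> b) \<Longrightarrow> st_le W (r a) (r b)"
proof -
  assume a: "a \<in> ghosts U" and b: "b \<in> ghosts U" and h: "st_le V (\<alpha> a) (\<alpha> b)"
  have ga: "q a \<in> ghosts Ub" and gb: "q b \<in> ghosts Ub" using a b UE.Q_ghosts by auto
  have gc: "a \<in> st_carrier U" "b \<in> st_carrier U" using a b U.ghost_carrier by auto
  show ?thesis
  proof (cases "st_le U a b")
    case True
    hence "st_le Ub (q a) (q b)" using Ub_le_cls a b by simp
    moreover have "(q a, q a) \<in> F" "(q b, q b) \<in> F" using F_rep[OF gc(1) gc(1)] F_rep[OF gc(2) gc(2)] by simp_all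
    ultimately have "\<exists>A' B'. A' \<in> ghosts Ub \<and> B' \<in> ghosts Ub \<and> (q a, A') \<in> F \<and> (q b, B') \<in> F \<and> st_le Ub A' B'"
      using ga gb by blast
    thus ?thesis unfolding r_def using UF.Q_le_cls[OF ga gb] by simp
  next
    case False
    hence "st_le U b a" using U.le_total a b by blast
    hence "st_le V (\<alpha> b) (\<alpha> a)" using al_le a b by blast
    hence "\<alpha> a = \<alpha> b" using h V.le_antisym[OF al_ghost[OF a] al_ghost[OF b]] by blast
    hence "(q a, q b) \<in> F" "(q b, q b) \<in> F" using F_rep[OF gc(1) gc(2)] F_rep[OF gc(2) gc(2)] ghosts_A[OF a] ghosts_A[OF b] by simp_all
    moreover have "st_le Ub (q b) (q b)" using Ub_le_cls b U.le_refl by simp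
    ultimately have "\<exists>A' B'. A' \<in> ghosts Ub \<and> B' \<in> ghosts Ub \<and> (q a, A') \<in> F \<and> (q b, B') \<in> F \<and> st_le Ub A' B'"
      using gb by blast
    thus ?thesis unfolding r_def using UF.Q_le_cls[OF ga gb] by simp
  qed
qed

definition "mu Z = \<alpha> (SOME x. x \<in> st_carrier U \<and> r x = Z)"

lemma mu_r: "x \<in> st_carrier U \<Longrightarrow> mu (r x) = \<alpha> x"
proof -
  assume x: "x \<in> st_carrier U"
  define y where "y = (SOME y. y \<in> st_carrier U \<and> r y = r x)"
  have "\<exists>y. y \<in> st_carrier U \<and> r y = r x" using x by blast
  hence "y \<in> st_carrier U \<and> r y = r x" unfolding y_def by (rule someI_ex)
  hence "\<alpha> y = \<alpha> x" using r_al x by blast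
  thus ?thesis unfolding mu_def y_def by simp
qed


lemma r_C: "x \<in> st_carrier U \<Longrightarrow> r x \<in> st_carrier W" using W_carrier by simp

lemma lam_ic: "ideal_compression U Ub q"
proof -
  have gk: "ghost_kernel U Ub q = A"
    unfolding ghost_kernel_def using q_A A_C by auto
  have fc: "fiber_contraction U Ub q"
    unfolding fiber_contraction_def
  proof (intro conjI ballI impI)
    show "transmission U Ub q" by (rule UE.q_trans)
    show "q ` st_carrier U = st_carrier Ub" using Ub_carrier by simp
    have "inj_on q (ghosts U)" unfolding inj_on_def using q_ghost_inj by blast
    thus "bij_betw q (ghosts U) (ghosts Ub)" unfolding bij_betw_def using UE.Q_ghosts by simp
    fix x y assume "x \<in> ghosts U" "y \<in> ghosts U" "st_le Ub (q x) (q y)"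
    thus "st_le U x y" using Ub_le_cls by simp
  qed
  have inj: "inj_on q (st_carrier U - A)"
  proof (rule inj_onI)
    fix x y assume x: "x \<in> st_carrier U - A" and y: "y \<in> st_carrier U - A" and e: "q x = q y"
    thus "x = y" using q_eq[of x y] by simp
  qed
  have img: "q ` (st_carrier U - A) = tangibles Ub"
  proof
    show "q ` (st_carrier U - A) \<subseteq> tangibles Ub"
      unfolding tangibles_def using q_A q_C by auto
    show "tangibles Ub \<subseteq> q ` (st_carrier U - A)"
    proof
      fix X assume X: "X \<in> tangibles Ub"
      then obtain x where x: "x \<in> st_carrier U" "X = q x" unfolding tangibles_def using Ub_carrier by auto
      hence "x \<notin> A" using X q_A unfolding tangibles_def by auto
      thus "X \<in> q ` (st_carrier U - A)" using x by blast
    qed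
  qed
  show ?thesis unfolding ideal_compression_def gk bij_betw_def using fc inj img by simp
qed

lemma W_zero': "st_zero W = p (q (st_zero U))" using W_zero unfolding r_def .

lemma zk_sub: "zero_kernel Ub W p \<subseteq> ghosts Ub"
proof
  fix X assume X: "X \<in> zero_kernel Ub W p"
  then obtain x where x: "x \<in> st_carrier U" "X = q x" "r x = r (st_zero U)"
    unfolding zero_kernel_def W_zero' r_def using Ub_carrier by auto
  have "q x = q (st_zero U) \<or> x \<in> A" using r_eq[OF x(1) U.zero(1)] x(3) by auto
  moreover have "q x = q (st_zero U) \<Longrightarrow> x \<in> A"
    using q_A[OF x(1)] q_A[OF U.zero(1)] ghosts_A[OF U.zero_ghost] by simp
  ultimately have "x \<in> A" by blast
  thus "X \<in> ghosts Ub" using q_A x by simp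
qed

lemma bet_sgc: "strict_ghost_contraction Ub W p"
proof -
  have S: "st_carrier Ub - (ghosts Ub \<union> zero_kernel Ub W p) = q ` (st_carrier U - A)"
  proof
    show "st_carrier Ub - (ghosts Ub \<union> zero_kernel Ub W p) \<subseteq> q ` (st_carrier U - A)"
      using Ub_carrier q_A by auto
    show "q ` (st_carrier U - A) \<subseteq> st_carrier Ub - (ghosts Ub \<union> zero_kernel Ub W p)"
      using zk_sub q_A q_C by auto
  qed
  have inj: "inj_on p (q ` (st_carrier U - A))"
  proof (rule inj_onI)
    fix X Y assume X: "X \<in> q ` (st_carrier U - A)" and Y: "Y \<in> q ` (st_carrier U - A)" and e: "p X = p Y"
    obtain x where x: "x \<in> st_carrier U" "x \<notin> A" "X = q x" using X by auto
    obtain y where y: "y \<in> st_carrier U" "y \<notin> A" "Y = q y" using Y by auto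
    have "r x = r y" using e x y unfolding r_def by simp
    thus "X = Y" using r_eq[OF x(1) y(1)] x y by simp
  qed
  have img: "p ` q ` (st_carrier U - A) = tangibles W"
  proof
    show "p ` q ` (st_carrier U - A) \<subseteq> tangibles W"
    proof
      fix Z assume "Z \<in> p ` q ` (st_carrier U - A)"
      then obtain x where x: "x \<in> st_carrier U" "x \<notin> A" "Z = r x" unfolding r_def by auto
      thus "Z \<in> tangibles W" unfolding tangibles_def using r_ghost_iff r_C by simp
    qed
    show "tangibles W \<subseteq> p ` q ` (st_carrier U - A)"
    proof
      fix Z assume Z: "Z \<in> tangibles W"
      then obtain x where x: "x \<in> st_carrier U" "Z = r x" unfolding tangibles_def W_carrier by auto
      hence "x \<notin> A" using Z r_ghost_iff unfolding tangibles_def by auto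
      thus "Z \<in> p ` q ` (st_carrier U - A)" using x unfolding r_def by blast
    qed
  qed
  show ?thesis
    unfolding strict_ghost_contraction_def ghost_contraction_def bij_betw_def S
    using UF.q_trans UF.Q_ghosts inj img zk_sub by simp
qed

lemma mu_trans: "transmission W V mu"
  unfolding transmission_def
proof (intro conjI ballI impI)
  show "mu ` st_carrier W \<subseteq> st_carrier V" unfolding W_carrier using mu_r al_C by auto
  show "mu (st_zero W) = st_zero V" using W_zero mu_r U.zero al_zero by simp
  show "mu (st_one W) = st_one V" using W_one mu_r U.one al_one by simp
  show "mu (st_e W) = st_e V" using W_e mu_r U.ee al_e by simp
  fix X Y
  assume X: "X \<in> st_carrier W" and Y: "Y \<in> st_carrier W"
  then obtain x y where x: "x \<in> st_carrier U" "X = r x" and y: "y \<in> st_carrier U" "Y = r y"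
    unfolding W_carrier by auto
  show "mu (st_mult W X Y) = st_mult V (mu X) (mu Y)"
    using x y W_mult mu_r U.closed al_mult by simp
next
  fix X Y assume X: "X \<in> ghosts W" and Y: "Y \<in> ghosts W" and h: "st_le W X Y"
  obtain a where a: "a \<in> ghosts U" "X = r a" using X W_ghosts by auto
  obtain b where b: "b \<in> ghosts U" "Y = r b" using Y W_ghosts by auto
  have "st_le V (\<alpha> a) (\<alpha> b)" using W_le_D a b h by simp
  thus "st_le V (mu X) (mu Y)" using a b mu_r U.ghost_carrier by simp
qed

lemma ghostsV: "ghosts V = \<alpha> ` ghosts U"
proof -
  have "ghosts V = (\<lambda>x. st_mult V (st_e V) (\<alpha> x)) ` st_carrier U"
    unfolding ghosts_def surj[symmetric] image_comp comp_def by simp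
  also have "\<dots> = (\<lambda>x. \<alpha> (st_mult U (st_e U) x)) ` st_carrier U"
    using al_ex by (intro image_cong) auto
  also have "\<dots> = \<alpha> ` ghosts U" unfolding ghosts_def image_comp comp_def by simp
  finally show ?thesis .
qed

lemma mu_fc: "fiber_contraction W V mu"
  unfolding fiber_contraction_def
proof (intro conjI ballI impI)
  show "transmission W V mu" by (rule mu_trans)
  show "mu ` st_carrier W = st_carrier V"
    unfolding W_carrier surj[symmetric] image_comp comp_def using mu_r by (intro image_cong) auto
  have inj: "inj_on mu (ghosts W)"
  proof (rule inj_onI)
    fix X Y assume X: "X \<in> ghosts W" and Y: "Y \<in> ghosts W" and e: "mu X = mu Y"
    obtain a where a: "a \<in> ghosts U" "X = r a" using X W_ghosts by auto
    obtain b where b: "b \<in> ghosts U" "Y = r b" using Y W_ghosts by auto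
    have c: "a \<in> st_carrier U" "b \<in> st_carrier U" using a b U.ghost_carrier by auto
    have "\<alpha> a = \<alpha> b" using e a b mu_r c by simp
    thus "X = Y" using r_eq[OF c] ghosts_A a b by simp
  qed
  have "mu ` ghosts W = ghosts V"
    unfolding W_ghosts ghostsV image_comp comp_def using mu_r U.ghost_carrier by (intro image_cong) auto
  thus "bij_betw mu (ghosts W) (ghosts V)" using inj unfolding bij_betw_def by simp
  fix X Y assume X: "X \<in> ghosts W" and Y: "Y \<in> ghosts W" and h: "st_le V (mu X) (mu Y)"
  obtain a where a: "a \<in> ghosts U" "X = r a" using X W_ghosts by auto
  obtain b where b: "b \<in> ghosts U" "Y = r b" using Y W_ghosts by auto
  have "st_le V (\<alpha> a) (\<alpha> b)" using h a b mu_r U.ghost_carrier by simp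
  thus "st_le W X Y" using W_le_I a b by simp
qed

lemma mu_tang: "tangible_transmission W V mu"
  unfolding tangible_transmission_def
proof (intro conjI)
  show "transmission W V mu" by (rule mu_trans)
  show "mu ` tangibles W \<subseteq> tangibles V \<union> {st_zero V}"
  proof
    fix Z assume "Z \<in> mu ` tangibles W"
    then obtain X where X: "X \<in> tangibles W" "Z = mu X" by auto
    then obtain x where x: "x \<in> st_carrier U" "X = r x" unfolding tangibles_def W_carrier by auto
    hence "x \<notin> A" using X r_ghost_iff unfolding tangibles_def by auto
    hence "\<alpha> x \<in> tangibles V" unfolding tangibles_def using A_iff x al_C by simp
    thus "Z \<in> tangibles V \<union> {st_zero V}" using X x mu_r by simp
  qed
qed

lemma canonical: "is_factorization U V \<alpha> Ub W (quot_map U E) (quot_map Ub F) mu"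
  unfolding is_factorization_def quot_map_def
  using Ub_st W_st lam_ic bet_sgc mu_tang mu_fc mu_r[unfolded r_def] by simp

end



lemma trans_cong:
  assumes "supertropical_monoid U" "transmission U V f" "\<And>x. x \<in> st_carrier U \<Longrightarrow> f x = g x"
  shows "transmission U V g"
proof -
  interpret stl U using assms(1) by (rule stl.intro)
  show ?thesis using assms(2) unfolding transmission_def
    using assms(3) zero one ee closed ghost_carrier by (simp add: image_def)
qed

lemma induced:
  fixes U :: "('a,'m) stm_scheme" and X :: "('b,'n) stm_scheme" and X' :: "('c,'o) stm_scheme"
  assumes stU: "supertropical_monoid U"
    and tf: "transmission U X f" and tf': "transmission U X' f'"
    and sf: "f ` st_carrier U = st_carrier X" and sf': "f' ` st_carrier U = st_carrier X'"
    and kern: "\<And>x y. x \<in> st_carrier U \<Longrightarrow> y \<in> st_carrier U \<Longrightarrow> f x = f y \<longleftrightarrow> f' x = f' y"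
    and ord: "\<And>x y. x \<in> st_carrier U \<Longrightarrow> y \<in> st_carrier U \<Longrightarrow> f x \<in> ghosts X \<Longrightarrow> f y \<in> ghosts X \<Longrightarrow>
       st_le X (f x) (f y) \<Longrightarrow> st_le X' (f' x) (f' y)"
  defines "h \<equiv> \<lambda>u. f' (SOME x. x \<in> st_carrier U \<and> f x = u)"
  shows "transmission X X' h" "\<And>x. x \<in> st_carrier U \<Longrightarrow> h (f x) = f' x"
    "bij_betw h (st_carrier X) (st_carrier X')"
proof -
  interpret U: stl U using stU by (rule stl.intro)
  show hf: "\<And>x. x \<in> st_carrier U \<Longrightarrow> h (f x) = f' x"
  proof -
    fix x assume x: "x \<in> st_carrier U"
    define y where "y = (SOME y. y \<in> st_carrier U \<and> f y = f x)"
    have "\<exists>y. y \<in> st_carrier U \<and> f y = f x" using x by blast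
    hence "y \<in> st_carrier U \<and> f y = f x" unfolding y_def by (rule someI_ex)
    hence "f' y = f' x" using kern x by blast
    thus "h (f x) = f' x" unfolding h_def y_def by simp
  qed
  have f0: "f (st_zero U) = st_zero X" "f (st_one U) = st_one X" "f (st_e U) = st_e X"
    and f'0: "f' (st_zero U) = st_zero X'" "f' (st_one U) = st_one X'" "f' (st_e U) = st_e X'"
    using tf tf' unfolding transmission_def by auto
  have fm: "\<And>x y. x \<in> st_carrier U \<Longrightarrow> y \<in> st_carrier U \<Longrightarrow> f (st_mult U x y) = st_mult X (f x) (f y)"
    using tf unfolding transmission_def by blast
  have f'm: "\<And>x y. x \<in> st_carrier U \<Longrightarrow> y \<in> st_carrier U \<Longrightarrow> f' (st_mult U x y) = st_mult X' (f' x) (f' y)"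
    using tf' unfolding transmission_def by blast
  show "transmission X X' h"
    unfolding transmission_def
  proof (intro conjI ballI impI)
    show "h ` st_carrier X \<subseteq> st_carrier X'" unfolding sf[symmetric] sf'[symmetric] using hf by auto
    show "h (st_zero X) = st_zero X'" using hf f0 f'0 U.zero by metis
    show "h (st_one X) = st_one X'" using hf f0 f'0 U.one by metis
    show "h (st_e X) = st_e X'" using hf f0 f'0 U.ee by metis
    fix u v assume u: "u \<in> st_carrier X" and v: "v \<in> st_carrier X"
    then obtain x y where x: "x \<in> st_carrier U" "u = f x" and y: "y \<in> st_carrier U" "v = f y"
      unfolding sf[symmetric] by auto
    have "st_mult X u v = f (st_mult U x y)" using fm x y by simp
    thus "h (st_mult X u v) = st_mult X' (h u) (h v)"
      using x y hf f'm U.closed by simp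
  next
    fix u v assume u: "u \<in> ghosts X" and v: "v \<in> ghosts X" and le: "st_le X u v"
    have gX: "\<And>w. w \<in> ghosts X \<Longrightarrow> w \<in> st_carrier X"
    proof -
      fix w assume "w \<in> ghosts X"
      then obtain w0 where w0: "w0 \<in> st_carrier X" "w = st_mult X (st_e X) w0" unfolding ghosts_def by blast
      then obtain z where z: "z \<in> st_carrier U" "w0 = f z" unfolding sf[symmetric] by blast
      have "w = f (st_mult U (st_e U) z)" using w0 z fm U.ee f0 by simp
      thus "w \<in> st_carrier X" unfolding sf[symmetric] using U.closed U.ee z by blast
    qed
    have "u \<in> st_carrier X" "v \<in> st_carrier X" using u v gX by auto
    then obtain x y where x: "x \<in> st_carrier U" "u = f x" and y: "y \<in> st_carrier U" "v = f y"
      unfolding sf[symmetric] by auto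
    show "st_le X' (h u) (h v)" using ord[OF x(1) y(1)] u v le x y hf by simp
  qed
  have inj: "inj_on h (st_carrier X)"
  proof (rule inj_onI)
    fix u v assume u: "u \<in> st_carrier X" and v: "v \<in> st_carrier X" and e: "h u = h v"
    then obtain x y where x: "x \<in> st_carrier U" "u = f x" and y: "y \<in> st_carrier U" "v = f y"
      unfolding sf[symmetric] by auto
    thus "u = v" using e hf kern by simp
  qed
  have "h ` st_carrier X = st_carrier X'"
    unfolding sf[symmetric] sf'[symmetric] image_comp comp_def using hf by (intro image_cong) auto
  thus "bij_betw h (st_carrier X) (st_carrier X')" using inj unfolding bij_betw_def by simp
qed


lemma induced_iso:
  fixes U :: "('a,'m) stm_scheme" and X :: "('b,'n) stm_scheme" and X' :: "('c,'o) stm_scheme"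
  assumes stU: "supertropical_monoid U" and stX: "supertropical_monoid X" and stX': "supertropical_monoid X'"
    and tf: "transmission U X f" and tf': "transmission U X' f'"
    and sf: "f ` st_carrier U = st_carrier X" and sf': "f' ` st_carrier U = st_carrier X'"
    and kern: "\<And>x y. x \<in> st_carrier U \<Longrightarrow> y \<in> st_carrier U \<Longrightarrow> f x = f y \<longleftrightarrow> f' x = f' y"
    and ord: "\<And>x y. x \<in> st_carrier U \<Longrightarrow> y \<in> st_carrier U \<Longrightarrow> f x \<in> ghosts X \<Longrightarrow> f y \<in> ghosts X \<Longrightarrow>
       st_le X (f x) (f y) \<longleftrightarrow> st_le X' (f' x) (f' y)"
  shows "\<exists>h. stm_iso X X' h \<and> (\<forall>x\<in>st_carrier U. h (f x) = f' x)"
proof -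
  interpret U: stl U using stU by (rule stl.intro)
  interpret X: stl X using stX by (rule stl.intro)
  interpret X': stl X' using stX' by (rule stl.intro)
  have fm: "\<And>x y. x \<in> st_carrier U \<Longrightarrow> y \<in> st_carrier U \<Longrightarrow> f (st_mult U x y) = st_mult X (f x) (f y)"
    using tf unfolding transmission_def by blast
  have f'm: "\<And>x y. x \<in> st_carrier U \<Longrightarrow> y \<in> st_carrier U \<Longrightarrow> f' (st_mult U x y) = st_mult X' (f' x) (f' y)"
    using tf' unfolding transmission_def by blast
  have fe: "f (st_e U) = st_e X" "f' (st_e U) = st_e X'" using tf tf' unfolding transmission_def by auto
  have gh: "\<And>x. x \<in> st_carrier U \<Longrightarrow> f x \<in> ghosts X \<longleftrightarrow> f' x \<in> ghosts X'"
  proof -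
    fix x assume x: "x \<in> st_carrier U"
    have ex: "st_mult U (st_e U) x \<in> st_carrier U" using U.closed U.ee x by simp
    have cx: "f x \<in> st_carrier X" "f' x \<in> st_carrier X'" using x sf sf' by auto
    have "f x \<in> ghosts X \<longleftrightarrow> f (st_mult U (st_e U) x) = f x"
      using X.ghost_iff cx fm[OF U.ee(1) x] fe by simp
    also have "\<dots> \<longleftrightarrow> f' (st_mult U (st_e U) x) = f' x" using kern[OF ex x] .
    also have "\<dots> \<longleftrightarrow> f' x \<in> ghosts X'"
      using X'.ghost_iff cx f'm[OF U.ee(1) x] fe by simp
    finally show "f x \<in> ghosts X \<longleftrightarrow> f' x \<in> ghosts X'" .
  qed
  define h where "h = (\<lambda>u. f' (SOME x. x \<in> st_carrier U \<and> f x = u))"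
  define h' where "h' = (\<lambda>u. f (SOME x. x \<in> st_carrier U \<and> f' x = u))"
  have H: "transmission X X' h" "\<And>x. x \<in> st_carrier U \<Longrightarrow> h (f x) = f' x"
    "bij_betw h (st_carrier X) (st_carrier X')"
    unfolding h_def using induced[OF stU tf tf' sf sf' kern] ord by blast+
  have H': "transmission X' X h'" "\<And>x. x \<in> st_carrier U \<Longrightarrow> h' (f' x) = f x"
  proof -
    have kern': "\<And>x y. x \<in> st_carrier U \<Longrightarrow> y \<in> st_carrier U \<Longrightarrow> f' x = f' y \<longleftrightarrow> f x = f y"
      using kern by simp
    have ord': "\<And>x y. x \<in> st_carrier U \<Longrightarrow> y \<in> st_carrier U \<Longrightarrow> f' x \<in> ghosts X' \<Longrightarrow> f' y \<in> ghosts X' \<Longrightarrow>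
       st_le X' (f' x) (f' y) \<Longrightarrow> st_le X (f x) (f y)"
      using ord gh by blast
    show "transmission X' X h'" "\<And>x. x \<in> st_carrier U \<Longrightarrow> h' (f' x) = f x"
      unfolding h'_def using induced[OF stU tf' tf sf' sf kern' ord'] by blast+
  qed
  have inv: "\<And>v. v \<in> st_carrier X' \<Longrightarrow> inv_into (st_carrier X) h v = h' v"
  proof -
    fix v assume "v \<in> st_carrier X'"
    then obtain x where x: "x \<in> st_carrier U" "v = f' x" using sf' by auto
    have inj: "inj_on h (st_carrier X)" using H(3) unfolding bij_betw_def by blast
    have "inv_into (st_carrier X) h (h (f x)) = f x" using inv_into_f_f[OF inj] x sf by auto
    thus "inv_into (st_carrier X) h v = h' v" using x H(2) H'(2) by simp
  qed
  have "transmission X' X (inv_into (st_carrier X) h)"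
    using trans_cong[OF stX' H'(1)] inv by metis
  hence "stm_iso X X' h" unfolding stm_iso_def using H by blast
  thus ?thesis using H(2) by blast
qed


lemma trans_comp:
  assumes "supertropical_monoid U" "transmission U V f" "transmission V W g"
  shows "transmission U W (\<lambda>x. g (f x))"
proof -
  interpret stl U using assms(1) by (rule stl.intro)
  have fC: "\<And>x. x \<in> st_carrier U \<Longrightarrow> f x \<in> st_carrier V" using assms(2) unfolding transmission_def by blast
  have gh: "\<And>x. x \<in> ghosts U \<Longrightarrow> f x \<in> ghosts V" using trans_ghost[OF assms(1) assms(2)] by blast
  show ?thesis using assms(2,3) fC gh unfolding transmission_def
    by (auto simp: image_subset_iff)
qed

locale fz = fac U V \<alpha> for U :: "('a,'m) stm_scheme" and V :: "('b,'n) stm_scheme" and \<alpha> +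
  fixes U1 :: "'c stm" and W1 :: "'d stm" and lam :: "'a \<Rightarrow> 'c" and bet :: "'c \<Rightarrow> 'd" and mu :: "'d \<Rightarrow> 'b"
  assumes fa: "is_factorization U V \<alpha> U1 W1 lam bet mu"
begin

lemma stU1: "supertropical_monoid U1" using fa unfolding is_factorization_def by blast
lemma stW1: "supertropical_monoid W1" using fa unfolding is_factorization_def by blast

sublocale U1: stl U1 by (rule stl.intro, rule stU1)
sublocale W1: stl W1 by (rule stl.intro, rule stW1)

lemma ic: "ideal_compression U U1 lam" using fa unfolding is_factorization_def by blast
lemma sgc: "strict_ghost_contraction U1 W1 bet" using fa unfolding is_factorization_def by blast
lemma mtt: "tangible_transmission W1 V mu" using fa unfolding is_factorization_def by blast
lemma mfc: "fiber_contraction W1 V mu" using fa unfolding is_factorization_def by blast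
lemma feq: "x \<in> st_carrier U \<Longrightarrow> \<alpha> x = mu (bet (lam x))" using fa unfolding is_factorization_def by blast

lemma lt: "transmission U U1 lam" using ic unfolding ideal_compression_def fiber_contraction_def by blast
lemma lsurj: "lam ` st_carrier U = st_carrier U1" using ic unfolding ideal_compression_def fiber_contraction_def by blast
lemma lbij: "bij_betw lam (ghosts U) (ghosts U1)" using ic unfolding ideal_compression_def fiber_contraction_def by blast
lemma lref: "x \<in> ghosts U \<Longrightarrow> y \<in> ghosts U \<Longrightarrow> st_le U1 (lam x) (lam y) \<Longrightarrow> st_le U x y"
  using ic unfolding ideal_compression_def fiber_contraction_def by blast
lemma ltan: "bij_betw lam (st_carrier U - ghost_kernel U U1 lam) (tangibles U1)"
  using ic unfolding ideal_compression_def by blast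

lemma bt: "transmission U1 W1 bet" using sgc unfolding strict_ghost_contraction_def ghost_contraction_def by blast
lemma bgh: "bet ` ghosts U1 = ghosts W1" using sgc unfolding strict_ghost_contraction_def ghost_contraction_def by blast
lemma bbij: "bij_betw bet (st_carrier U1 - (ghosts U1 \<union> zero_kernel U1 W1 bet)) (tangibles W1)"
  using sgc unfolding strict_ghost_contraction_def ghost_contraction_def by blast
lemma bzk: "zero_kernel U1 W1 bet \<subseteq> ghosts U1" using sgc unfolding strict_ghost_contraction_def by blast

lemma mt: "transmission W1 V mu" using mfc unfolding fiber_contraction_def by blast
lemma mtan: "mu ` tangibles W1 \<subseteq> tangibles V \<union> {st_zero V}" using mtt unfolding tangible_transmission_def by blast
lemma mbij: "bij_betw mu (ghosts W1) (ghosts V)" using mfc unfolding fiber_contraction_def by blast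
lemma mref: "x \<in> ghosts W1 \<Longrightarrow> y \<in> ghosts W1 \<Longrightarrow> st_le V (mu x) (mu y) \<Longrightarrow> st_le W1 x y"
  using mfc unfolding fiber_contraction_def by blast

lemma lam_C: "x \<in> st_carrier U \<Longrightarrow> lam x \<in> st_carrier U1" using lt unfolding transmission_def by blast
lemma bet_C: "u \<in> st_carrier U1 \<Longrightarrow> bet u \<in> st_carrier W1" using bt unfolding transmission_def by blast
lemma lam_e: "x \<in> st_carrier U \<Longrightarrow> lam (st_mult U (st_e U) x) = st_mult U1 (st_e U1) (lam x)"
  using lt U.ee unfolding transmission_def by simp
lemma mu_e: "w \<in> st_carrier W1 \<Longrightarrow> mu (st_mult W1 (st_e W1) w) = st_mult V (st_e V) (mu w)"
  using mt W1.ee unfolding transmission_def by simp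
lemma mu_zero: "mu (st_zero W1) = st_zero V" using mt unfolding transmission_def by blast
lemma bet_gh: "u \<in> ghosts U1 \<Longrightarrow> bet u \<in> ghosts W1" using trans_ghost[OF stU1 bt] .
lemma mu_gh: "w \<in> ghosts W1 \<Longrightarrow> mu w \<in> ghosts V" using trans_ghost[OF stW1 mt] .
lemma lam_gh: "x \<in> ghosts U \<Longrightarrow> lam x \<in> ghosts U1" using trans_ghost[OF U.st lt] .

lemma bet_tang: "u \<in> st_carrier U1 \<Longrightarrow> u \<notin> ghosts U1 \<Longrightarrow> bet u \<in> tangibles W1"
proof -
  assume u: "u \<in> st_carrier U1" "u \<notin> ghosts U1"
  hence "u \<in> st_carrier U1 - (ghosts U1 \<union> zero_kernel U1 W1 bet)" using bzk by blast
  thus ?thesis using bbij unfolding bij_betw_def by blast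
qed

lemma lam_A: "x \<in> st_carrier U \<Longrightarrow> lam x \<in> ghosts U1 \<longleftrightarrow> x \<in> A"
proof
  assume x: "x \<in> st_carrier U" and "lam x \<in> ghosts U1"
  hence "mu (bet (lam x)) \<in> ghosts V" using bet_gh mu_gh by blast
  thus "x \<in> A" using feq x A_iff by simp
next
  assume x: "x \<in> st_carrier U" and xA: "x \<in> A"
  show "lam x \<in> ghosts U1"
  proof (rule ccontr)
    assume ng: "lam x \<notin> ghosts U1"
    define w where "w = bet (lam x)"
    have wt: "w \<in> tangibles W1" unfolding w_def using bet_tang lam_C x ng by blast
    have wC: "w \<in> st_carrier W1" using wt unfolding tangibles_def by blast
    have mg: "mu w \<in> ghosts V" using feq x xA A_iff unfolding w_def by simp
    have "mu w \<in> tangibles V \<union> {st_zero V}" using mtan wt by blast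
    hence mw0: "mu w = st_zero V" using mg unfolding tangibles_def by blast
    have "mu (st_mult W1 (st_e W1) w) = st_zero V" using mu_e wC mw0 V.ghost_e V.zero_ghost by simp
    hence "mu (st_mult W1 (st_e W1) w) = mu (st_zero W1)" using mu_zero by simp
    moreover have "st_mult W1 (st_e W1) w \<in> ghosts W1" using W1.ghostI wC by blast
    moreover have "st_zero W1 \<in> ghosts W1" by (rule W1.zero_ghost)
    ultimately have "st_mult W1 (st_e W1) w = st_zero W1" using mbij unfolding bij_betw_def inj_on_def by blast
    hence "w = st_zero W1" using W1.e0 wC by blast
    thus False using wt W1.zero_ghost unfolding tangibles_def by blast
  qed
qed

lemma gk: "ghost_kernel U U1 lam = A"
  unfolding ghost_kernel_def using lam_A A_C by auto

lemma lam_eq: "x \<in> st_carrier U \<Longrightarrow> y \<in> st_carrier U \<Longrightarrow> lam x = lam y \<longleftrightarrow>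
   (x = y \<or> (x \<in> A \<and> y \<in> A \<and> st_mult U (st_e U) x = st_mult U (st_e U) y))"
proof
  assume x: "x \<in> st_carrier U" and y: "y \<in> st_carrier U" and e: "lam x = lam y"
  show "x = y \<or> (x \<in> A \<and> y \<in> A \<and> st_mult U (st_e U) x = st_mult U (st_e U) y)"
  proof (cases "x \<in> A")
    case True
    hence yA: "y \<in> A" using lam_A x y e by metis
    have gx: "lam x \<in> ghosts U1" using lam_A x True by simp
    have "lam (st_mult U (st_e U) x) = lam (st_mult U (st_e U) y)"
      using lam_e x y e U1.ghost_e gx by simp
    moreover have "st_mult U (st_e U) x \<in> ghosts U" "st_mult U (st_e U) y \<in> ghosts U" using U.ghostI x y by auto
    ultimately have "st_mult U (st_e U) x = st_mult U (st_e U) y" using lbij unfolding bij_betw_def inj_on_def by blast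
    thus ?thesis using True yA by blast
  next
    case False
    hence yA: "y \<notin> A" using lam_A x y e by metis
    have "inj_on lam (st_carrier U - A)" using ltan gk unfolding bij_betw_def by simp
    thus ?thesis using x y False yA e unfolding inj_on_def by blast
  qed
next
  assume x: "x \<in> st_carrier U" and y: "y \<in> st_carrier U"
    and h: "x = y \<or> (x \<in> A \<and> y \<in> A \<and> st_mult U (st_e U) x = st_mult U (st_e U) y)"
  show "lam x = lam y"
  proof (cases "x = y")
    case False
    hence h: "x \<in> A" "y \<in> A" "st_mult U (st_e U) x = st_mult U (st_e U) y" using h by auto
    have gx: "lam x \<in> ghosts U1" using lam_A x h by simp
    have gy: "lam y \<in> ghosts U1" using lam_A y h by simp
    have 1: "lam (st_mult U (st_e U) x) = lam x" using lam_e[OF x] U1.ghost_e[OF gx] by simp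
    have 2: "lam (st_mult U (st_e U) y) = lam y" using lam_e[OF y] U1.ghost_e[OF gy] by simp
    show ?thesis using 1 2 h(3) by metis
  qed simp
qed

lemma bl_gh: "x \<in> st_carrier U \<Longrightarrow> bet (lam x) \<in> ghosts W1 \<longleftrightarrow> x \<in> A"
proof
  assume x: "x \<in> st_carrier U" and g: "bet (lam x) \<in> ghosts W1"
  show "x \<in> A"
  proof (rule ccontr)
    assume "x \<notin> A"
    hence "bet (lam x) \<in> tangibles W1" using bet_tang lam_C x lam_A by blast
    thus False using g unfolding tangibles_def by blast
  qed
next
  assume x: "x \<in> st_carrier U" and "x \<in> A"
  thus "bet (lam x) \<in> ghosts W1" using lam_A bet_gh by blast
qed

lemma bl_eq: "x \<in> st_carrier U \<Longrightarrow> y \<in> st_carrier U \<Longrightarrow> bet (lam x) = bet (lam y) \<longleftrightarrow>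
   (x = y \<or> (x \<in> A \<and> y \<in> A \<and> \<alpha> x = \<alpha> y))"
proof
  assume x: "x \<in> st_carrier U" and y: "y \<in> st_carrier U" and e: "bet (lam x) = bet (lam y)"
  show "x = y \<or> (x \<in> A \<and> y \<in> A \<and> \<alpha> x = \<alpha> y)"
  proof (cases "x \<in> A")
    case True
    hence yA: "y \<in> A" using bl_gh x y e by metis
    have "\<alpha> x = \<alpha> y" using feq x y e by simp
    thus ?thesis using True yA by blast
  next
    case False
    hence yA: "y \<notin> A" using bl_gh x y e by metis
    have S: "lam x \<in> st_carrier U1 - (ghosts U1 \<union> zero_kernel U1 W1 bet)"
            "lam y \<in> st_carrier U1 - (ghosts U1 \<union> zero_kernel U1 W1 bet)"
      using lam_C lam_A x y False yA bzk by blast+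
    hence "lam x = lam y" using bbij e unfolding bij_betw_def inj_on_def by blast
    thus ?thesis using lam_eq x y False by simp
  qed
next
  assume x: "x \<in> st_carrier U" and y: "y \<in> st_carrier U"
    and h: "x = y \<or> (x \<in> A \<and> y \<in> A \<and> \<alpha> x = \<alpha> y)"
  show "bet (lam x) = bet (lam y)"
  proof (cases "x = y")
    case False
    hence h: "x \<in> A" "y \<in> A" "\<alpha> x = \<alpha> y" using h by auto
    have g: "bet (lam x) \<in> ghosts W1" "bet (lam y) \<in> ghosts W1" using bl_gh x y h by auto
    have "mu (bet (lam x)) = mu (bet (lam y))" using feq x y h by simp
    thus ?thesis using g mbij unfolding bij_betw_def inj_on_def by blast
  qed simp
qed

lemma bsurj: "bet ` st_carrier U1 = st_carrier W1"
proof
  show "bet ` st_carrier U1 \<subseteq> st_carrier W1" using bet_C by auto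
  show "st_carrier W1 \<subseteq> bet ` st_carrier U1"
  proof
    fix w assume w: "w \<in> st_carrier W1"
    show "w \<in> bet ` st_carrier U1"
    proof (cases "w \<in> ghosts W1")
      case True thus ?thesis using bgh U1.ghost_carrier by blast
    next
      case False
      hence "w \<in> tangibles W1" using w unfolding tangibles_def by blast
      thus ?thesis using bbij unfolding bij_betw_def by blast
    qed
  qed
qed

lemma blsurj: "(\<lambda>x. bet (lam x)) ` st_carrier U = st_carrier W1"
  using lsurj bsurj by (metis image_image)

lemma bltr: "transmission U W1 (\<lambda>x. bet (lam x))"
  by (rule trans_comp[OF U.st lt bt])

lemma lam_ord: "x \<in> st_carrier U \<Longrightarrow> y \<in> st_carrier U \<Longrightarrow> lam x \<in> ghosts U1 \<Longrightarrow> lam y \<in> ghosts U1 \<Longrightarrow>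
  st_le U1 (lam x) (lam y) \<longleftrightarrow> st_le U (st_mult U (st_e U) x) (st_mult U (st_e U) y)"
proof -
  assume x: "x \<in> st_carrier U" and y: "y \<in> st_carrier U" and gx: "lam x \<in> ghosts U1" and gy: "lam y \<in> ghosts U1"
  have 1: "lam x = lam (st_mult U (st_e U) x)" "lam y = lam (st_mult U (st_e U) y)"
    using lam_e x y U1.ghost_e gx gy by simp_all
  have g: "st_mult U (st_e U) x \<in> ghosts U" "st_mult U (st_e U) y \<in> ghosts U" using U.ghostI x y by auto
  show ?thesis
  proof
    assume "st_le U1 (lam x) (lam y)"
    thus "st_le U (st_mult U (st_e U) x) (st_mult U (st_e U) y)" using lref g 1 by simp
  next
    assume "st_le U (st_mult U (st_e U) x) (st_mult U (st_e U) y)"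
    thus "st_le U1 (lam x) (lam y)" using lt g 1 unfolding transmission_def by simp
  qed
qed

lemma bl_ord: "x \<in> st_carrier U \<Longrightarrow> y \<in> st_carrier U \<Longrightarrow> bet (lam x) \<in> ghosts W1 \<Longrightarrow> bet (lam y) \<in> ghosts W1 \<Longrightarrow>
  st_le W1 (bet (lam x)) (bet (lam y)) \<longleftrightarrow> st_le V (\<alpha> x) (\<alpha> y)"
proof -
  assume x: "x \<in> st_carrier U" and y: "y \<in> st_carrier U" and gx: "bet (lam x) \<in> ghosts W1" and gy: "bet (lam y) \<in> ghosts W1"
  show ?thesis
  proof
    assume "st_le W1 (bet (lam x)) (bet (lam y))"
    thus "st_le V (\<alpha> x) (\<alpha> y)" using mt gx gy feq x y unfolding transmission_def by simp
  next
    assume "st_le V (\<alpha> x) (\<alpha> y)"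
    thus "st_le W1 (bet (lam x)) (bet (lam y))" using mref gx gy feq x y by simp
  qed
qed

end


context fac begin

lemma uniq:
  fixes U1 :: "'c stm" and W1 :: "'d stm" and U2 :: "'e stm" and W2 :: "'f stm"
  assumes f1: "is_factorization U V \<alpha> U1 W1 lam bet muA" and f2: "is_factorization U V \<alpha> U2 W2 lam' bet' muB"
  shows "\<exists>\<rho> \<sigma>. stm_iso U1 U2 \<rho> \<and> stm_iso W1 W2 \<sigma> \<and>
           (\<forall>m\<in>ghosts U. \<rho> (lam m) = lam' m) \<and>
           (\<forall>y\<in>ghosts W1. muB (\<sigma> y) = muA y) \<and>
           (\<forall>x\<in>st_carrier U. lam' x = \<rho> (lam x)) \<and>
           (\<forall>y\<in>st_carrier W2. muB y = muA (inv_into (st_carrier W1) \<sigma> y)) \<and>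
           (\<forall>u\<in>st_carrier U2. bet' u = \<sigma> (bet (inv_into (st_carrier U1) \<rho> u)))"
proof -
  interpret A1: fz U V \<alpha> U1 W1 lam bet muA by (intro fz.intro fac_axioms fz_axioms.intro f1)
  interpret A2: fz U V \<alpha> U2 W2 lam' bet' muB by (intro fz.intro fac_axioms fz_axioms.intro f2)
  have kern1: "\<And>x y. x \<in> st_carrier U \<Longrightarrow> y \<in> st_carrier U \<Longrightarrow> lam x = lam y \<longleftrightarrow> lam' x = lam' y"
    using A1.lam_eq A2.lam_eq by simp
  have ord1: "\<And>x y. x \<in> st_carrier U \<Longrightarrow> y \<in> st_carrier U \<Longrightarrow> lam x \<in> ghosts U1 \<Longrightarrow> lam y \<in> ghosts U1 \<Longrightarrow>
       st_le U1 (lam x) (lam y) \<longleftrightarrow> st_le U2 (lam' x) (lam' y)"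
  proof -
    fix x y assume x: "x \<in> st_carrier U" and y: "y \<in> st_carrier U" and gx: "lam x \<in> ghosts U1" and gy: "lam y \<in> ghosts U1"
    have gx': "lam' x \<in> ghosts U2" and gy': "lam' y \<in> ghosts U2" using A1.lam_A A2.lam_A x y gx gy by auto
    show "st_le U1 (lam x) (lam y) \<longleftrightarrow> st_le U2 (lam' x) (lam' y)"
      using A1.lam_ord[OF x y gx gy] A2.lam_ord[OF x y gx' gy'] by simp
  qed
  obtain \<rho> where rho: "stm_iso U1 U2 \<rho>" "\<forall>x\<in>st_carrier U. \<rho> (lam x) = lam' x"
    using induced_iso[OF U.st A1.stU1 A2.stU1 A1.lt A2.lt A1.lsurj A2.lsurj kern1 ord1] by blast
  have kern2: "\<And>x y. x \<in> st_carrier U \<Longrightarrow> y \<in> st_carrier U \<Longrightarrow> bet (lam x) = bet (lam y) \<longleftrightarrow> bet' (lam' x) = bet' (lam' y)"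
    using A1.bl_eq A2.bl_eq by simp
  have ord2: "\<And>x y. x \<in> st_carrier U \<Longrightarrow> y \<in> st_carrier U \<Longrightarrow> bet (lam x) \<in> ghosts W1 \<Longrightarrow> bet (lam y) \<in> ghosts W1 \<Longrightarrow>
       st_le W1 (bet (lam x)) (bet (lam y)) \<longleftrightarrow> st_le W2 (bet' (lam' x)) (bet' (lam' y))"
  proof -
    fix x y assume x: "x \<in> st_carrier U" and y: "y \<in> st_carrier U" and gx: "bet (lam x) \<in> ghosts W1" and gy: "bet (lam y) \<in> ghosts W1"
    have gx': "bet' (lam' x) \<in> ghosts W2" and gy': "bet' (lam' y) \<in> ghosts W2" using A1.bl_gh A2.bl_gh x y gx gy by auto
    show "st_le W1 (bet (lam x)) (bet (lam y)) \<longleftrightarrow> st_le W2 (bet' (lam' x)) (bet' (lam' y))"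
      using A1.bl_ord[OF x y gx gy] A2.bl_ord[OF x y gx' gy'] by simp
  qed
  obtain \<sigma> where sig: "stm_iso W1 W2 \<sigma>" "\<forall>x\<in>st_carrier U. \<sigma> (bet (lam x)) = bet' (lam' x)"
    using induced_iso[OF U.st A1.stW1 A2.stW1 A1.bltr A2.bltr A1.blsurj A2.blsurj kern2 ord2] by blast
  have injr: "inj_on \<rho> (st_carrier U1)" using rho(1) unfolding stm_iso_def bij_betw_def by blast
  have injs: "inj_on \<sigma> (st_carrier W1)" using sig(1) unfolding stm_iso_def bij_betw_def by blast
  have e1: "\<forall>m\<in>ghosts U. \<rho> (lam m) = lam' m" using rho(2) U.ghost_carrier by blast
  have e2: "\<forall>y\<in>st_carrier W1. muB (\<sigma> y) = muA y"
  proof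
    fix y assume "y \<in> st_carrier W1"
    then obtain x where x: "x \<in> st_carrier U" "y = bet (lam x)" using A1.blsurj by auto
    thus "muB (\<sigma> y) = muA y" using sig(2) A1.feq A2.feq by simp
  qed
  have e4: "\<forall>y\<in>st_carrier W2. muB y = muA (inv_into (st_carrier W1) \<sigma> y)"
  proof
    fix y assume "y \<in> st_carrier W2"
    then obtain x where x: "x \<in> st_carrier U" "y = bet' (lam' x)" using A2.blsurj by auto
    have "bet (lam x) \<in> st_carrier W1" using A1.blsurj x by auto
    hence "inv_into (st_carrier W1) \<sigma> y = bet (lam x)" using inv_into_f_f[OF injs] sig(2) x by metis
    thus "muB y = muA (inv_into (st_carrier W1) \<sigma> y)" using x A1.feq A2.feq by simp
  qed
  have e5: "\<forall>u\<in>st_carrier U2. bet' u = \<sigma> (bet (inv_into (st_carrier U1) \<rho> u))"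
  proof
    fix u assume "u \<in> st_carrier U2"
    then obtain x where x: "x \<in> st_carrier U" "u = lam' x" using A2.lsurj by auto
    have "lam x \<in> st_carrier U1" using A1.lam_C x by simp
    hence "inv_into (st_carrier U1) \<rho> u = lam x" using inv_into_f_f[OF injr] rho(2) x by metis
    thus "bet' u = \<sigma> (bet (inv_into (st_carrier U1) \<rho> u))" using x sig(2) by simp
  qed
  show ?thesis
    apply (rule exI[of _ \<rho>], rule exI[of _ \<sigma>])
    using rho sig e1 e2 e4 e5 A1.W1.ghost_carrier by auto
qed

end


theorem theorem2p8:
  fixes U :: "'a stm" and V :: "'b stm" and \<alpha> :: "'a \<Rightarrow> 'b"
  assumes "supertropical_monoid U" and "supertropical_monoid V"
    and "transmission U V \<alpha>" and "\<alpha> ` st_carrier U = st_carrier V"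
  shows
    \<comment> \<open>(i) existence\<close>
    "(\<exists>(U1 :: 'a set stm) (W1 :: 'a set set stm) lam bet mu.
        is_factorization U V \<alpha> U1 W1 lam bet mu)
     \<and>
     \<comment> \<open>(ii) essential uniqueness\<close>
     (\<forall>(U1 :: 'c stm) (W1 :: 'd stm) lam bet mu (U2 :: 'e stm) (W2 :: 'f stm) lam' bet' mu'.
        is_factorization U V \<alpha> U1 W1 lam bet mu \<and> is_factorization U V \<alpha> U2 W2 lam' bet' mu' \<longrightarrow>
        (\<exists>\<rho> \<sigma>. stm_iso U1 U2 \<rho> \<and> stm_iso W1 W2 \<sigma> \<and>
           (\<forall>m\<in>ghosts U. \<rho> (lam m) = lam' m) \<and>
           (\<forall>y\<in>ghosts W1. mu' (\<sigma> y) = mu y) \<and>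
           (\<forall>x\<in>st_carrier U. lam' x = \<rho> (lam x)) \<and>
           (\<forall>y\<in>st_carrier W2. mu' y = mu (inv_into (st_carrier W1) \<sigma> y)) \<and>
           (\<forall>u\<in>st_carrier U2. bet' u = \<sigma> (bet (inv_into (st_carrier U1) \<rho> u)))))
     \<and>
     \<comment> \<open>(iii) the canonical choice\<close>
     (let A = ghost_kernel U V \<alpha>;
          E = rel_E U A;
          Ub = quot_stm U E;
          g = (\<lambda>X. \<alpha> (SOME x. x \<in> X \<inter> ghosts U));
          F = rel_F Ub g (st_zero V);
          W = quot_stm Ub F
      in \<exists>mu. is_factorization U V \<alpha> Ub W (quot_map U E) (quot_map Ub F) mu)"
proof -
  interpret FF: fac U V \<alpha> by (intro fac.intro stl.intro fac_axioms.intro assms)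
  have iii: "let A = ghost_kernel U V \<alpha>;
          E = rel_E U A;
          Ub = quot_stm U E;
          g = (\<lambda>X. \<alpha> (SOME x. x \<in> X \<inter> ghosts U));
          F = rel_F Ub g (st_zero V);
          W = quot_stm Ub F
      in \<exists>mu. is_factorization U V \<alpha> Ub W (quot_map U E) (quot_map Ub F) mu"
    using FF.canonical unfolding Let_def FF.A_def FF.g_def by blast
  have i: "\<exists>(U1 :: 'a set stm) (W1 :: 'a set set stm) lam bet mu. is_factorization U V \<alpha> U1 W1 lam bet mu"
    using FF.canonical by blast
  show ?thesis using i iii FF.uniq by blast
qed

end
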